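(* Let $A,Y$ take values in $\{-1,1\}$. Scenario I: $\Pr\{A=1\}=1/2$; $X_1=A$; $\Pr\{Y=y\mid A=a\}=\frac{1}{1+\exp(-2ay)}$; $X_2=Y+N$ where $N\sim\mathcal{N}(0,1)$ is independent of $(A,Y)$; and $R^*=X_1+X_2=A+X_2$, $\tilde R=X_2$. Scenario II: $\Pr\{A=1\}=1/2$; conditional on $A=a$, $X_3$ is a mixture of $\mathcal{N}(a+1,1)$ with weight $\frac{1}{1+\exp(-2a)}$ and $\mathcal{N}(a-1,1)$ with weight $\frac{1}{1+\exp(2a)}$; conditional on $X_3=x_3$ (and $A$), $\Pr\{Y=y\mid X_3=x_3\}=\frac{1}{1+\exp(-2yx_3)}$, so that $Y$ is independent of $A$ given $X_3$; and $R^*=X_3$, $\tilde R=X_3-A$. Then the joint distributions of $(Y,A,R^*,\tilde R)$ are identical in the two scenarios. Moreover, in each scenario $R^*$ and $\tilde R$ are optimal unconstrained and equalized odds scores respectively, in that their ROC curves are optimal and, for any loss function, an optimal unconstrained classifier (among all possibly randomized classifiers based on the scenario's features and $A$) can be derived from $R^*$ by thresholding, and an optimal equalized odds classifier (among all such classifiers satisfying equalized odds) can be derived from $\tilde R$ by thresholding.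
   Context: A score or predictor $S$ satisfies equalized odds with respect to $A$ and $Y$ if $S$ and $A$ are independent conditional on $Y$. Thresholding a score $S$ means using the classifier $\mathbb{I}\{S>t\}$ for some threshold $t$. The features of Scenario I are $(X_1,X_2)$ and of Scenario II is $X_3$. *)

theory Defs
  imports "HOL-Probability.Probability"
begin

text \<open>Binary labels and protected attribute take values in {-1,1} (as reals).
A randomized classifier based on features F (which include A) is represented by
the (measurable, [0,1]-valued) probability g = h o F that it predicts 1.\<close>

definition rand_clf :: "'a measure \<Rightarrow> ('a \<Rightarrow> 'f::topological_space) \<Rightarrow> ('a \<Rightarrow> real) \<Rightarrow> bool" where
  "rand_clf M F g \<longleftrightarrow>
     (\<exists>h \<in> borel_measurable borel. (\<forall>z. 0 \<le> h z \<and> h z \<le> 1) \<and> (\<forall>\<omega>\<in>space M. g \<omega> = h (F \<omega>)))"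

definition thresh :: "('a \<Rightarrow> real) \<Rightarrow> ereal \<Rightarrow> 'a \<Rightarrow> real" where
  "thresh S t = (\<lambda>\<omega>. if t < ereal (S \<omega>) then 1 else 0)"

definition grp_rate :: "'a measure \<Rightarrow> ('a \<Rightarrow> real) \<Rightarrow> ('a \<Rightarrow> real) \<Rightarrow> ('a \<Rightarrow> real) \<Rightarrow> real \<Rightarrow> real \<Rightarrow> real" where
  "grp_rate M Y A g y a =
     (\<integral>\<omega>. g \<omega> * indicator {\<omega>\<in>space M. Y \<omega> = y \<and> A \<omega> = a} \<omega> \<partial>M)
       / measure M {\<omega>\<in>space M. Y \<omega> = y \<and> A \<omega> = a}"

definition rate :: "'a measure \<Rightarrow> ('a \<Rightarrow> real) \<Rightarrow> ('a \<Rightarrow> real) \<Rightarrow> real \<Rightarrow> real" where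
  "rate M Y g y =
     (\<integral>\<omega>. g \<omega> * indicator {\<omega>\<in>space M. Y \<omega> = y} \<omega> \<partial>M) / measure M {\<omega>\<in>space M. Y \<omega> = y}"

definition tpr :: "'a measure \<Rightarrow> ('a \<Rightarrow> real) \<Rightarrow> ('a \<Rightarrow> real) \<Rightarrow> real" where
  "tpr M Y g = rate M Y g 1"

definition fpr :: "'a measure \<Rightarrow> ('a \<Rightarrow> real) \<Rightarrow> ('a \<Rightarrow> real) \<Rightarrow> real" where
  "fpr M Y g = rate M Y g (-1)"

definition eo_clf :: "'a measure \<Rightarrow> ('a \<Rightarrow> real) \<Rightarrow> ('a \<Rightarrow> real) \<Rightarrow> ('a \<Rightarrow> real) \<Rightarrow> bool" where
  "eo_clf M Y A g \<longleftrightarrow> (\<forall>y\<in>{-1,1}. grp_rate M Y A g y 1 = grp_rate M Y A g y (-1))"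

definition eo_score :: "'a measure \<Rightarrow> ('a \<Rightarrow> real) \<Rightarrow> ('a \<Rightarrow> real) \<Rightarrow> ('a \<Rightarrow> real) \<Rightarrow> bool" where
  "eo_score M Y A S \<longleftrightarrow>
     (\<forall>y\<in>{-1,1}. \<forall>a\<in>{-1,1}. \<forall>B\<in>sets borel.
        measure M {\<omega>\<in>space M. S \<omega> \<in> B \<and> A \<omega> = a \<and> Y \<omega> = y} * measure M {\<omega>\<in>space M. Y \<omega> = y}
        = measure M {\<omega>\<in>space M. S \<omega> \<in> B \<and> Y \<omega> = y} * measure M {\<omega>\<in>space M. A \<omega> = a \<and> Y \<omega> = y})"

text \<open>Expected loss E[l(Yhat, Y)] of a randomized classifier g; l takes (prediction, label).\<close>
definition exp_loss :: "'a measure \<Rightarrow> ('a \<Rightarrow> real) \<Rightarrow> (real \<Rightarrow> real \<Rightarrow> real) \<Rightarrow> ('a \<Rightarrow> real) \<Rightarrow> real" where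
  "exp_loss M Y l g = (\<integral>\<omega>. g \<omega> * l 1 (Y \<omega>) + (1 - g \<omega>) * l (-1) (Y \<omega>) \<partial>M)"

definition loss_fn :: "(real \<Rightarrow> real \<Rightarrow> real) \<Rightarrow> bool" where
  "loss_fn l \<longleftrightarrow> l 1 1 \<le> l (-1) 1 \<and> l (-1) (-1) \<le> l 1 (-1)"

definition opt_unconstrained_score ::
  "'a measure \<Rightarrow> ('a \<Rightarrow> real) \<Rightarrow> ('a \<Rightarrow> 'f::topological_space) \<Rightarrow> ('a \<Rightarrow> real) \<Rightarrow> bool" where
  "opt_unconstrained_score M Y F S \<longleftrightarrow>
     (\<forall>g. rand_clf M F g \<longrightarrow>
        (\<exists>t. fpr M Y (thresh S t) \<le> fpr M Y g \<and> tpr M Y g \<le> tpr M Y (thresh S t))) \<and>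
     (\<forall>l. loss_fn l \<longrightarrow>
        (\<exists>t. \<forall>g. rand_clf M F g \<longrightarrow> exp_loss M Y l (thresh S t) \<le> exp_loss M Y l g))"

definition opt_eo_score ::
  "'a measure \<Rightarrow> ('a \<Rightarrow> real) \<Rightarrow> ('a \<Rightarrow> real) \<Rightarrow> ('a \<Rightarrow> 'f::topological_space) \<Rightarrow> ('a \<Rightarrow> real) \<Rightarrow> bool" where
  "opt_eo_score M Y A F S \<longleftrightarrow>
     eo_score M Y A S \<and>
     (\<forall>g. rand_clf M F g \<and> eo_clf M Y A g \<longrightarrow>
        (\<exists>t. fpr M Y (thresh S t) \<le> fpr M Y g \<and> tpr M Y g \<le> tpr M Y (thresh S t))) \<and>
     (\<forall>l. loss_fn l \<longrightarrow>
        (\<exists>t. eo_clf M Y A (thresh S t) \<and>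
             (\<forall>g. rand_clf M F g \<and> eo_clf M Y A g \<longrightarrow> exp_loss M Y l (thresh S t) \<le> exp_loss M Y l g)))"

end

theory Submission
  imports Defs
begin


definition nu :: "real \<Rightarrow> real measure" where
  "nu y = density lborel (\<lambda>x. ennreal (normal_density y 1 x))"

definition pp :: "real \<Rightarrow> real \<Rightarrow> real" where
  "pp y a = 1 / (1 + exp (-2*a*y)) / 2"

lemma nu_prob: "prob_space (nu y)"
  unfolding nu_def by (rule prob_space_normal_density) simp

lemma sets_nu[simp, measurable_cong]: "sets (nu y) = sets borel"
  unfolding nu_def by simp

lemma space_nu[simp]: "space (nu y) = UNIV"
  unfolding nu_def by simp

lemma integral_nu: "f \<in> borel_measurable borel \<Longrightarrow>
   (\<integral>x. f x \<partial>nu y) = (\<integral>x. normal_density y 1 x * f x \<partial>lborel)"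
  unfolding nu_def by (subst integral_density) auto

lemma (in prob_space) integral_restr:
  fixes S :: "'a set" and X :: "'a \<Rightarrow> real" and \<mu> :: "real measure"
  assumes S[measurable]: "S \<in> sets M" and X[measurable]: "X \<in> borel_measurable M"
   and mu: "finite_measure \<mu>" "sets \<mu> = sets borel" and c: "0 \<le> c"
   and eq: "\<And>B. B \<in> sets borel \<Longrightarrow> measure M {\<omega>\<in>space M. \<omega> \<in> S \<and> X \<omega> \<in> B} = c * measure \<mu> B"
   and f[measurable]: "f \<in> borel_measurable borel"
  shows "(\<integral>\<omega>. indicator S \<omega> * f (X \<omega>) \<partial>M) = c * (\<integral>x. f x \<partial>\<mu>)"
proof -
  have D: "distr (density M (\<lambda>x. ennreal (indicator S x :: real))) borel X = density \<mu> (\<lambda>_. ennreal c)"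
  proof (rule measure_eqI)
    show "sets (distr (density M (\<lambda>x. ennreal (indicator S x :: real))) borel X) = sets (density \<mu> (\<lambda>_. ennreal c))"
      using mu by simp
  next
    fix B assume "B \<in> sets (distr (density M (\<lambda>x. ennreal (indicator S x :: real))) borel X)"
    then have B[measurable]: "B \<in> sets borel" by simp
    have "emeasure (distr (density M (\<lambda>x. ennreal (indicator S x :: real))) borel X) B
        = emeasure (density M (\<lambda>x. ennreal (indicator S x :: real))) (X -` B \<inter> space M)"
      by (subst emeasure_distr) auto
    also have "\<dots> = (\<integral>\<^sup>+x. indicator {\<omega>\<in>space M. \<omega> \<in> S \<and> X \<omega> \<in> B} x \<partial>M)"
      apply (subst emeasure_density)
        apply measurable
      apply (rule nn_integral_cong)
      apply (auto simp: indicator_def)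
      done
    also have "\<dots> = emeasure M {\<omega>\<in>space M. \<omega> \<in> S \<and> X \<omega> \<in> B}"
      by (rule nn_integral_indicator) measurable
    also have "\<dots> = ennreal (c * measure \<mu> B)"
      by (simp add: emeasure_eq_measure eq)
    also have "\<dots> = ennreal c * emeasure \<mu> B"
      using mu c by (simp add: finite_measure.emeasure_eq_measure ennreal_mult)
    also have "\<dots> = emeasure (density \<mu> (\<lambda>_. ennreal c)) B"
      using mu B by (subst emeasure_density) (auto simp: nn_integral_cmult_indicator)
    finally show "emeasure (distr (density M (\<lambda>x. ennreal (indicator S x :: real))) borel X) B
        = emeasure (density \<mu> (\<lambda>_. ennreal c)) B" .
  qed
  have "(\<integral>\<omega>. indicator S \<omega> * f (X \<omega>) \<partial>M) = (\<integral>\<omega>. f (X \<omega>) \<partial>density M (\<lambda>x. ennreal (indicator S x :: real)))"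
    by (subst integral_density) auto
  also have "\<dots> = (\<integral>x. f x \<partial>distr (density M (\<lambda>x. ennreal (indicator S x :: real))) borel X)"
    by (subst integral_distr) auto
  also have "\<dots> = (\<integral>x. f x \<partial>density \<mu> (\<lambda>_. ennreal c))" by (simp add: D)
  also have "\<dots> = c * (\<integral>x. f x \<partial>\<mu>)"
  proof -
    have fm: "f \<in> borel_measurable \<mu>" by (subst measurable_cong_sets[OF mu(2) refl]) (rule assms(7))
    have "(\<integral>x. f x \<partial>density \<mu> (\<lambda>_. ennreal c)) = (\<integral>x. c *\<^sub>R f x \<partial>\<mu>)"
      by (rule integral_density[OF fm, of "\<lambda>_. c"]) (auto simp: c)
    then show ?thesis by simp
  qed
  finally show ?thesis .
qed

lemma sig_sum: "1 / (1 + exp (- x)) + 1 / (1 + exp x) = (1::real)"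
proof -
  have p: "0 < exp x" by simp
  have q: "0 < 1 + exp x" using p by linarith
  have e: "exp (- x) = inverse (exp x)" by (simp add: exp_minus)
  have "1 / (1 + exp (- x)) = exp x / (1 + exp x)" using p q by (simp add: e field_simps)
  then show ?thesis using q by (simp add: field_simps)
qed

lemma pp_nonneg: "0 \<le> pp y a"
  unfolding pp_def by (simp add: add_pos_pos less_imp_le)

lemma pp_sum: "pp y 1 + pp y (-1) = 1/2"
proof -
  have 1: "pp y 1 = 1/(1+exp(-(2*y)))/2" by (simp add: pp_def)
  have 2: "pp y (-1) = 1/(1+exp(2*y))/2" by (simp add: pp_def)
  show ?thesis unfolding 1 2 add_divide_distrib[symmetric] sig_sum by simp
qed

locale model = prob_space M for M :: "'a measure" +
  fixes Y A Z :: "'a \<Rightarrow> real"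
  assumes mY[measurable]: "Y \<in> borel_measurable M" and mA[measurable]: "A \<in> borel_measurable M"
    and mZ[measurable]: "Z \<in> borel_measurable M"
    and vals: "\<And>\<omega>. \<omega> \<in> space M \<Longrightarrow> Y \<omega> \<in> {-1,1} \<and> A \<omega> \<in> {-1,1}"
    and law: "\<And>y a B. y \<in> {-1,1} \<Longrightarrow> a \<in> {-1,1} \<Longrightarrow> B \<in> sets borel \<Longrightarrow>
        measure M {\<omega>\<in>space M. Y \<omega> = y \<and> A \<omega> = a \<and> Z \<omega> \<in> B} = pp y a * measure (nu y) B"
begin

lemma KL:
  assumes y: "y \<in> {-1,1}" and a: "a \<in> {-1,1}" and f[measurable]: "f \<in> borel_measurable borel"
  shows "(\<integral>\<omega>. indicator {\<omega>\<in>space M. Y \<omega> = y \<and> A \<omega> = a} \<omega> * f (Z \<omega>) \<partial>M) = pp y a * (\<integral>z. f z \<partial>nu y)"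
proof (rule integral_restr)
  show "finite_measure (nu y)" using nu_prob prob_space.finite_measure by blast
  fix B :: "real set" assume B: "B \<in> sets borel"
  have "{\<omega> \<in> space M. \<omega> \<in> {\<omega> \<in> space M. Y \<omega> = y \<and> A \<omega> = a} \<and> Z \<omega> \<in> B}
      = {\<omega>\<in>space M. Y \<omega> = y \<and> A \<omega> = a \<and> Z \<omega> \<in> B}" by auto
  then show "measure M {\<omega> \<in> space M. \<omega> \<in> {\<omega> \<in> space M. Y \<omega> = y \<and> A \<omega> = a} \<and> Z \<omega> \<in> B} =
         pp y a * measure (nu y) B" using law[OF y a B] by simp
qed (auto simp: pp_nonneg)

lemma IF:
  fixes H :: "real \<times> real \<times> real \<Rightarrow> real"
  assumes H[measurable]: "H \<in> borel_measurable borel" and bd: "\<And>x. \<bar>H x\<bar> \<le> K"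
  shows "(\<integral>\<omega>. H (Y \<omega>, A \<omega>, Z \<omega>) \<partial>M) = (\<Sum>y\<in>{-1,1}. \<Sum>a\<in>{-1,1}. pp y a * (\<integral>z. H (y,a,z) \<partial>nu y))"
proof -
  define S where "S y a = {\<omega>\<in>space M. Y \<omega> = y \<and> A \<omega> = a}" for y a
  have Sm[measurable]: "S y a \<in> sets M" for y a unfolding S_def by measurable
  have K0: "0 \<le> K" using bd[of undefined] by linarith
  have int: "integrable M (\<lambda>\<omega>. indicator (S y a) \<omega> * H (y, a, Z \<omega>))" for y a
    by (rule integrable_const_bound[where B=K]) (auto simp: indicator_def bd K0)
  have "(\<integral>\<omega>. H (Y \<omega>, A \<omega>, Z \<omega>) \<partial>M)
      = (\<integral>\<omega>. (\<Sum>y\<in>{-1,1}. \<Sum>a\<in>{-1,1}. indicator (S y a) \<omega> * H (y, a, Z \<omega>)) \<partial>M)"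
  proof (rule Bochner_Integration.integral_cong[OF refl])
    fix \<omega> assume w: "\<omega> \<in> space M"
    then show "H (Y \<omega>, A \<omega>, Z \<omega>) = (\<Sum>y\<in>{-1,1}. \<Sum>a\<in>{-1,1}. indicator (S y a) \<omega> * H (y, a, Z \<omega>))"
      using vals[OF w] by (auto simp: S_def indicator_def)
  qed
  also have "\<dots> = (\<Sum>y\<in>{-1,1}. \<Sum>a\<in>{-1,1}. (\<integral>\<omega>. indicator (S y a) \<omega> * H (y, a, Z \<omega>) \<partial>M))"
  proof -
    have "(\<integral>\<omega>. (\<Sum>y\<in>{-1,1}. \<Sum>a\<in>{-1,1}. indicator (S y a) \<omega> * H (y, a, Z \<omega>)) \<partial>M)
       = (\<Sum>y\<in>{-1,1}. (\<integral>\<omega>. (\<Sum>a\<in>{-1,1}. indicator (S y a) \<omega> * H (y, a, Z \<omega>)) \<partial>M))"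
      by (rule Bochner_Integration.integral_sum[where f="\<lambda>y \<omega>. (\<Sum>a\<in>{-1,1}. indicator (S y a) \<omega> * H (y, a, Z \<omega>))"]) (intro Bochner_Integration.integrable_sum int)
    also have "\<dots> = (\<Sum>y\<in>{-1,1}. \<Sum>a\<in>{-1,1}. (\<integral>\<omega>. indicator (S y a) \<omega> * H (y, a, Z \<omega>) \<partial>M))"
      by (intro sum.cong refl Bochner_Integration.integral_sum[where f="\<lambda>a \<omega>. indicator (S _ a) \<omega> * H (_, a, Z \<omega>)"]) (auto intro!: int)
    finally show ?thesis .
  qed
  also have "\<dots> = (\<Sum>y\<in>{-1,1}. \<Sum>a\<in>{-1,1}. pp y a * (\<integral>z. H (y,a,z) \<partial>nu y))"
    unfolding S_def by (intro sum.cong refl KL) auto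
  finally show ?thesis .
qed

lemma IFm:
  fixes E :: "(real \<times> real \<times> real) set"
  assumes E[measurable]: "E \<in> sets borel"
  shows "measure M {\<omega>\<in>space M. (Y \<omega>, A \<omega>, Z \<omega>) \<in> E}
     = (\<Sum>y\<in>{-1,1}. \<Sum>a\<in>{-1,1}. pp y a * measure (nu y) {z. (y,a,z) \<in> E})"
proof -
  have "measure M {\<omega>\<in>space M. (Y \<omega>, A \<omega>, Z \<omega>) \<in> E} = (\<integral>\<omega>. indicator E (Y \<omega>, A \<omega>, Z \<omega>) \<partial>M)"
  proof -
    have "(\<integral>\<omega>. indicator E (Y \<omega>, A \<omega>, Z \<omega>) \<partial>M) = (\<integral>\<omega>. indicator {\<omega>\<in>space M. (Y \<omega>, A \<omega>, Z \<omega>) \<in> E} \<omega> \<partial>M)"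
      by (rule Bochner_Integration.integral_cong) (auto simp: indicator_def)
    also have "\<dots> = measure M {\<omega>\<in>space M. (Y \<omega>, A \<omega>, Z \<omega>) \<in> E}"
      by (simp add: Int_absorb2 subsetI)
    finally show ?thesis by simp
  qed
  also have "\<dots> = (\<Sum>y\<in>{-1,1}. \<Sum>a\<in>{-1,1}. pp y a * (\<integral>z. indicator E (y,a,z) \<partial>nu y))"
    by (rule IF[where K=1]) (auto simp: indicator_def)
  also have "\<dots> = (\<Sum>y\<in>{-1,1}. \<Sum>a\<in>{-1,1}. pp y a * measure (nu y) {z. (y,a,z) \<in> E})"
  proof (intro sum.cong refl)
    fix y a :: real
    have "(\<integral>z. indicator E (y,a,z) \<partial>nu y) = (\<integral>z. indicator {z. (y,a,z) \<in> E} z \<partial>nu y)"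
      by (rule Bochner_Integration.integral_cong) (auto simp: indicator_def)
    also have "\<dots> = measure (nu y) {z. (y,a,z) \<in> E}"
      by simp
    finally show "pp y a * (\<integral>z. indicator E (y,a,z) \<partial>nu y) = pp y a * measure (nu y) {z. (y,a,z) \<in> E}" by simp
  qed
  finally show ?thesis .
qed

end




definition isk :: "(real \<times> real \<Rightarrow> real) \<Rightarrow> bool" where
  "isk k \<longleftrightarrow> k \<in> borel_measurable borel \<and> (\<forall>x. 0 \<le> k x \<and> k x \<le> 1)"

definition J :: "(real \<times> real \<Rightarrow> real) \<Rightarrow> real \<Rightarrow> real \<Rightarrow> real" where
  "J k a y = (\<integral>z. k (a,z) \<partial>nu y)"

definition good :: "ereal \<Rightarrow> real \<Rightarrow> real \<Rightarrow> bool" where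
  "good t u w \<longleftrightarrow> (\<forall>s c. 0 \<le> c \<and> c \<le> 1 \<longrightarrow> 0 \<le> ((if t < ereal s then 1 else 0) - c) * (u * exp (2 * s) - w))"

lemma good_real: "good (ereal t) 1 (exp (2*t))"
  unfolding good_def
proof (intro allI impI)
  fix s c :: real assume c: "0 \<le> c \<and> c \<le> 1"
  show "0 \<le> ((if ereal t < ereal s then 1 else 0) - c) * (1 * exp (2 * s) - exp (2*t))"
  proof (cases "t < s")
    case True then show ?thesis using c by (auto intro!: mult_nonneg_nonneg)
  next
    case False then have "exp (2 * s) \<le> exp (2*t)" by simp
    then show ?thesis using c False by (simp add: mult_nonneg_nonpos)
  qed
qed

lemma good_ex: assumes "0 \<le> u" "0 \<le> w" shows "\<exists>t. good t u w"
proof (cases "u = 0")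
  case True
  show ?thesis by (rule exI[of _ PInfty]) (use True assms in \<open>auto simp: good_def\<close>)
next
  case False
  then have u: "0 < u" using assms by simp
  show ?thesis
  proof (cases "w = 0")
    case True
    show ?thesis by (rule exI[of _ MInfty]) (use True u in \<open>auto simp: good_def\<close>)
  next
    case False
    then have w: "0 < w" using assms by simp
    define t where "t = ln (w/u) / 2"
    have et: "exp (2*t) = w / u" using u w by (simp add: t_def)
    show ?thesis
    proof (rule exI[of _ "ereal t"], unfold good_def, intro allI impI)
      fix s c :: real assume c: "0 \<le> c \<and> c \<le> 1"
      have "0 \<le> ((if ereal t < ereal s then 1 else 0) - c) * (1 * exp (2 * s) - exp (2*t))"
        using good_real[of t] c unfolding good_def by blast
      then have "0 \<le> u * (((if ereal t < ereal s then 1 else 0) - c) * (1 * exp (2 * s) - exp (2*t)))"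
        using u by simp
      also have "u * (((if ereal t < ereal s then 1 else 0) - c) * (1 * exp (2 * s) - exp (2*t)))
         = ((if ereal t < ereal s then 1 else 0) - c) * (u * exp (2 * s) - u * exp (2*t))"
        by algebra
      also have "\<dots> = ((if ereal t < ereal s then 1 else 0) - c) * (u * exp (2 * s) - w)"
        using u et by simp
      finally show "0 \<le> ((if t < ereal s then 1 else 0) - c) * (u * exp (2 * s) - w)" by simp
    qed
  qed
qed

lemma nd_rel: "normal_density 1 1 z = normal_density (-1) 1 z * exp (2*z)"
proof -
  have e: "-(z-1)\<^sup>2/2 = -(z+1)\<^sup>2/2 + 2*z" by (simp add: power2_eq_square field_simps)
  have "exp (-(z-1)\<^sup>2/2) = exp (-(z+1)\<^sup>2/2) * exp (2*z)"
    unfolding e exp_add by simp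
  then show ?thesis unfolding normal_density_def by simp
qed

lemma integrable_nd:
  fixes f :: "real \<Rightarrow> real"
  assumes [measurable]: "f \<in> borel_measurable borel" and b: "\<And>z. \<bar>f z\<bar> \<le> K"
  shows "integrable lborel (\<lambda>z. normal_density y 1 z * f z)"
proof (rule Bochner_Integration.integrable_bound[where f="\<lambda>z. K * normal_density y 1 z"])
  show "integrable lborel (\<lambda>z. K * normal_density y 1 z)" by simp
  show "AE x in lborel. norm (normal_density y 1 x * f x) \<le> norm (K * normal_density y 1 x)"
  proof (rule AE_I2)
    fix x
    have "\<bar>f x\<bar> * normal_density y 1 x \<le> K * normal_density y 1 x"
      using b[of x] by (intro mult_right_mono) auto
    moreover have "0 \<le> K" using b[of x] by linarith
    ultimately show "norm (normal_density y 1 x * f x) \<le> norm (K * normal_density y 1 x)"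
      by (simp add: abs_mult mult.commute)
  qed
qed measurable

lemma NP1:
  fixes k1 kt :: "real \<Rightarrow> real"
  assumes [measurable]: "k1 \<in> borel_measurable borel" "kt \<in> borel_measurable borel"
    and b1: "\<And>z. 0 \<le> k1 z \<and> k1 z \<le> 1" and bt: "\<And>z. 0 \<le> kt z \<and> kt z \<le> 1"
    and pw: "\<And>z. 0 \<le> (kt z - k1 z) * (u * exp (2*(b+z)) - w)"
  shows "0 \<le> u * exp (2*b) * ((\<integral>z. kt z \<partial>nu 1) - (\<integral>z. k1 z \<partial>nu 1))
             - w * ((\<integral>z. kt z \<partial>nu (-1)) - (\<integral>z. k1 z \<partial>nu (-1)))"
proof -
  have i: "integrable lborel (\<lambda>z. normal_density y 1 z * f z)"
    if "f \<in> borel_measurable borel" "\<And>z. 0 \<le> f z \<and> f z \<le> 1" for f y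
    by (rule integrable_nd[where K=1]) (use that in auto)
  have "u * exp (2*b) * ((\<integral>z. kt z \<partial>nu 1) - (\<integral>z. k1 z \<partial>nu 1))
             - w * ((\<integral>z. kt z \<partial>nu (-1)) - (\<integral>z. k1 z \<partial>nu (-1)))
     = u * exp (2*b) * ((\<integral>z. normal_density 1 1 z * kt z \<partial>lborel) - (\<integral>z. normal_density 1 1 z * k1 z \<partial>lborel))
             - w * ((\<integral>z. normal_density (-1) 1 z * kt z \<partial>lborel) - (\<integral>z. normal_density (-1) 1 z * k1 z \<partial>lborel))"
    by (simp add: integral_nu)
  also have "\<dots> = (\<integral>z. u * exp (2*b) * (normal_density 1 1 z * kt z - normal_density 1 1 z * k1 z)
      - w * (normal_density (-1) 1 z * kt z - normal_density (-1) 1 z * k1 z) \<partial>lborel)"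
    using i[of kt 1] i[of k1 1] i[of kt "-1"] i[of k1 "-1"] b1 bt by simp
  also have "\<dots> = (\<integral>z. normal_density (-1) 1 z * ((kt z - k1 z) * (u * exp (2*(b+z)) - w)) \<partial>lborel)"
    by (rule Bochner_Integration.integral_cong) (auto simp: nd_rel exp_add algebra_simps)
  also have "0 \<le> \<dots>"
    by (intro integral_nonneg_AE AE_I2 mult_nonneg_nonneg[OF normal_density_nonneg pw])
  finally show ?thesis by simp
qed




definition TP :: "(real \<times> real \<Rightarrow> real) \<Rightarrow> real" where
  "TP k = pp 1 1 * J k 1 1 + pp 1 (-1) * J k (-1) 1"
definition FP :: "(real \<times> real \<Rightarrow> real) \<Rightarrow> real" where
  "FP k = pp (-1) 1 * J k 1 (-1) + pp (-1) (-1) * J k (-1) (-1)"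
definition CL :: "(real \<Rightarrow> real \<Rightarrow> real) \<Rightarrow> real" where
  "CL l = (\<Sum>y\<in>{-1,1}. \<Sum>a\<in>{-1,1}. pp y a * l (-1) y)"

lemma borel_fst[measurable (raw)]:
  fixes f :: "'a \<Rightarrow> 'b::second_countable_topology \<times> 'c::second_countable_topology"
  shows "f \<in> borel_measurable M \<Longrightarrow> (\<lambda>x. fst (f x)) \<in> borel_measurable M"
  by (erule measurable_compose) (intro borel_measurable_continuous_onI continuous_intros)

lemma borel_snd[measurable (raw)]:
  fixes f :: "'a \<Rightarrow> 'b::second_countable_topology \<times> 'c::second_countable_topology"
  shows "f \<in> borel_measurable M \<Longrightarrow> (\<lambda>x. snd (f x)) \<in> borel_measurable M"
  by (erule measurable_compose) (intro borel_measurable_continuous_onI continuous_intros)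

lemma nu_UNIV: "measure (nu y) UNIV = 1"
  by (metis nu_prob prob_space.prob_space space_nu)

lemma pp_sum': "pp y (-1) + pp y 1 = 1/2"
  using pp_sum[of y] by simp

lemma pp_pos: "0 < pp y a"
  unfolding pp_def by (simp add: add_pos_pos)

lemma isk_meas[measurable]: "isk k \<Longrightarrow> k \<in> borel_measurable borel"
  unfolding isk_def by simp

lemma isk_bd: "isk k \<Longrightarrow> 0 \<le> k x \<and> k x \<le> 1"
  unfolding isk_def by blast

lemma int_k_nu: "isk k \<Longrightarrow> integrable (nu y) (\<lambda>z. k (a,z))"
proof -
  assume k: "isk k"
  interpret prob_space "nu y" by (rule nu_prob)
  show ?thesis
    by (rule integrable_const_bound[where B=1]) (use k isk_bd[OF k] in auto)
qed

lemma J_bd: "isk k \<Longrightarrow> 0 \<le> J k a y \<and> J k a y \<le> 1"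
proof -
  assume k: "isk k"
  interpret prob_space "nu y" by (rule nu_prob)
  have "0 \<le> J k a y" unfolding J_def using isk_bd[OF k] by (intro integral_nonneg_AE) auto
  moreover have "J k a y \<le> (\<integral>z. 1 \<partial>nu y)" unfolding J_def
    using isk_bd[OF k] int_k_nu[OF k] by (intro integral_mono) auto
  ultimately show ?thesis using nu_UNIV[of y] by simp
qed

lemma int_aff: "isk k \<Longrightarrow> (\<integral>z. k (a,z) * p + (1 - k (a,z)) * q \<partial>nu y) = q + (p - q) * J k a y"
proof -
  assume k: "isk k"
  interpret prob_space "nu y" by (rule nu_prob)
  have "(\<integral>z. k (a,z) * p + (1 - k (a,z)) * q \<partial>nu y) = (\<integral>z. q + k (a,z) * (p - q) \<partial>nu y)"
    by (rule Bochner_Integration.integral_cong) (auto simp: algebra_simps)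
  also have "\<dots> = q + (p - q) * J k a y"
    using int_k_nu[OF k, of y a] nu_UNIV[of y] unfolding J_def by (simp add: mult.commute)
  finally show ?thesis .
qed

lemma cvx_bd: "0 \<le> (c::real) \<Longrightarrow> c \<le> 1 \<Longrightarrow> \<bar>c * p + (1 - c) * q\<bar> \<le> \<bar>p\<bar> + \<bar>q\<bar>"
proof -
  assume c: "0 \<le> c" "c \<le> 1"
  have "\<bar>c * p + (1 - c) * q\<bar> \<le> \<bar>c * p\<bar> + \<bar>(1 - c) * q\<bar>" by (metis abs_triangle_ineq)
  also have "\<dots> = c * \<bar>p\<bar> + (1 - c) * \<bar>q\<bar>" using c by (simp add: abs_mult)
  also have "\<dots> \<le> 1 * \<bar>p\<bar> + 1 * \<bar>q\<bar>" using c by (intro add_mono mult_right_mono) auto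
  finally show ?thesis by simp
qed

context model
begin

lemma meas_ya: "y \<in> {-1,1} \<Longrightarrow> a \<in> {-1,1} \<Longrightarrow> prob {\<omega>\<in>space M. Y \<omega> = y \<and> A \<omega> = a} = pp y a"
proof -
  assume y: "y \<in> {-1,1}" and a: "a \<in> {-1,1}"
  have "{\<omega>\<in>space M. Y \<omega> = y \<and> A \<omega> = a} = {\<omega>\<in>space M. Y \<omega> = y \<and> A \<omega> = a \<and> Z \<omega> \<in> UNIV}" by simp
  also have "prob \<dots> = pp y a * measure (nu y) UNIV" using law[OF y a, of UNIV] by simp
  also have "measure (nu y) UNIV = 1" using prob_space.prob_space[OF nu_prob, of y] by simp
  finally show ?thesis by simp
qed

lemma meas_y: "y \<in> {-1,1} \<Longrightarrow> prob {\<omega>\<in>space M. Y \<omega> = y} = 1/2"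
proof -
  assume y: "y \<in> {-1,1}"
  have E: "{x :: real \<times> real \<times> real. fst x = y} \<in> sets borel" by measurable
  have "{\<omega>\<in>space M. Y \<omega> = y} = {\<omega>\<in>space M. (Y \<omega>, A \<omega>, Z \<omega>) \<in> {x. fst x = y}}" by simp
  also have "prob \<dots> = (\<Sum>y'\<in>{-1,1}. \<Sum>a\<in>{-1,1}. pp y' a * measure (nu y') {z. (y',a,z) \<in> {x. fst x = y}})"
    by (rule IFm[OF E])
  also have "\<dots> = (\<Sum>y'\<in>{-1,1}. \<Sum>a\<in>{-1,1}. pp y' a * (if y' = y then 1 else 0))"
    using prob_space.prob_space[OF nu_prob] by (intro sum.cong refl) auto
  also have "\<dots> = 1/2" using y pp_sum pp_sum' by auto
  finally show ?thesis .
qed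

lemma num_k:
  assumes k: "isk k" and g: "\<forall>\<omega>\<in>space M. g \<omega> = k (A \<omega>, Z \<omega>)" and y: "y \<in> {-1,1}"
  shows "(\<integral>\<omega>. g \<omega> * indicator {\<omega>\<in>space M. Y \<omega> = y} \<omega> \<partial>M) = pp y 1 * J k 1 y + pp y (-1) * J k (-1) y"
proof -
  define H where "H = (\<lambda>x::real\<times>real\<times>real. k (fst (snd x), snd (snd x)) * (if fst x = y then 1 else 0))"
  have km[measurable]: "k \<in> borel_measurable borel" using isk_meas[OF k] .
  have [measurable]: "H \<in> borel_measurable borel" unfolding H_def by measurable
  have "(\<integral>\<omega>. g \<omega> * indicator {\<omega>\<in>space M. Y \<omega> = y} \<omega> \<partial>M) = (\<integral>\<omega>. H (Y \<omega>, A \<omega>, Z \<omega>) \<partial>M)"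
    by (rule Bochner_Integration.integral_cong) (auto simp: H_def g indicator_def)
  also have "\<dots> = (\<Sum>y'\<in>{-1,1}. \<Sum>a\<in>{-1,1}. pp y' a * (\<integral>z. H (y',a,z) \<partial>nu y'))"
    by (rule IF[where K=1]) (auto simp: H_def isk_bd[OF k] abs_le_iff)
  also have "\<dots> = pp y 1 * J k 1 y + pp y (-1) * J k (-1) y"
    using y by (auto simp: H_def J_def)
  finally show ?thesis .
qed

lemma gnum_k:
  assumes k: "isk k" and g: "\<forall>\<omega>\<in>space M. g \<omega> = k (A \<omega>, Z \<omega>)" and y: "y \<in> {-1,1}" and a: "a \<in> {-1,1}"
  shows "(\<integral>\<omega>. g \<omega> * indicator {\<omega>\<in>space M. Y \<omega> = y \<and> A \<omega> = a} \<omega> \<partial>M) = pp y a * J k a y"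
proof -
  define H where "H = (\<lambda>x::real\<times>real\<times>real. k (fst (snd x), snd (snd x)) * (if fst x = y \<and> fst (snd x) = a then 1 else 0))"
  have km[measurable]: "k \<in> borel_measurable borel" using isk_meas[OF k] .
  have [measurable]: "H \<in> borel_measurable borel" unfolding H_def by measurable
  have "(\<integral>\<omega>. g \<omega> * indicator {\<omega>\<in>space M. Y \<omega> = y \<and> A \<omega> = a} \<omega> \<partial>M) = (\<integral>\<omega>. H (Y \<omega>, A \<omega>, Z \<omega>) \<partial>M)"
    by (rule Bochner_Integration.integral_cong) (auto simp: H_def g indicator_def)
  also have "\<dots> = (\<Sum>y'\<in>{-1,1}. \<Sum>a'\<in>{-1,1}. pp y' a' * (\<integral>z. H (y',a',z) \<partial>nu y'))"
    by (rule IF[where K=1]) (auto simp: H_def isk_bd[OF k] abs_le_iff)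
  also have "\<dots> = pp y a * J k a y"
    using y a by (auto simp: H_def J_def)
  finally show ?thesis .
qed

lemma rate_k:
  assumes k: "isk k" and g: "\<forall>\<omega>\<in>space M. g \<omega> = k (A \<omega>, Z \<omega>)" and y: "y \<in> {-1,1}"
  shows "rate M Y g y = 2 * (pp y 1 * J k 1 y + pp y (-1) * J k (-1) y)"
  unfolding rate_def num_k[OF k g y] meas_y[OF y] by simp

lemma tpr_k: "isk k \<Longrightarrow> \<forall>\<omega>\<in>space M. g \<omega> = k (A \<omega>, Z \<omega>) \<Longrightarrow> tpr M Y g = 2 * TP k"
  unfolding tpr_def TP_def by (rule rate_k) auto

lemma fpr_k: "isk k \<Longrightarrow> \<forall>\<omega>\<in>space M. g \<omega> = k (A \<omega>, Z \<omega>) \<Longrightarrow> fpr M Y g = 2 * FP k"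
  unfolding fpr_def FP_def by (rule rate_k) auto

lemma grp_k:
  assumes k: "isk k" and g: "\<forall>\<omega>\<in>space M. g \<omega> = k (A \<omega>, Z \<omega>)" and y: "y \<in> {-1,1}" and a: "a \<in> {-1,1}"
  shows "grp_rate M Y A g y a = J k a y"
  unfolding grp_rate_def gnum_k[OF k g y a] meas_ya[OF y a] using pp_pos[of y a] by simp

lemma loss_k:
  assumes k: "isk k" and g: "\<forall>\<omega>\<in>space M. g \<omega> = k (A \<omega>, Z \<omega>)"
  shows "exp_loss M Y l g = CL l + (l 1 1 - l (-1) 1) * TP k + (l 1 (-1) - l (-1) (-1)) * FP k"
proof -
  define L where "L c y = (if y = 1 then l c 1 else if y = -1 then l c (-1) else 0)" for c y :: real
  define H where "H = (\<lambda>x::real\<times>real\<times>real. k (fst (snd x), snd (snd x)) * L 1 (fst x) + (1 - k (fst (snd x), snd (snd x))) * L (-1) (fst x))"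
  have Hm[measurable]: "H \<in> borel_measurable borel" unfolding H_def L_def using k by measurable
  define K where "K = (\<bar>l 1 1\<bar> + \<bar>l 1 (-1)\<bar>) + (\<bar>l (-1) 1\<bar> + \<bar>l (-1) (-1)\<bar>)"
  have Lb: "\<bar>L c y\<bar> \<le> \<bar>l c 1\<bar> + \<bar>l c (-1)\<bar>" for c y by (auto simp: L_def)
  have Hb: "\<bar>H x\<bar> \<le> K" for x
  proof -
    obtain y a z where x: "x = (y,a,z)" by (cases x) auto
    have "\<bar>H x\<bar> \<le> \<bar>L 1 y\<bar> + \<bar>L (-1) y\<bar>" unfolding x H_def using isk_bd[OF k] by (simp add: cvx_bd)
    also have "\<dots> \<le> K" unfolding K_def using Lb[of 1 y] Lb[of "-1" y] by linarith
    finally show ?thesis .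
  qed
  have "exp_loss M Y l g = (\<integral>\<omega>. H (Y \<omega>, A \<omega>, Z \<omega>) \<partial>M)" unfolding exp_loss_def
  proof (rule Bochner_Integration.integral_cong[OF refl])
    fix \<omega> assume w: "\<omega> \<in> space M"
    then show "g \<omega> * l 1 (Y \<omega>) + (1 - g \<omega>) * l (-1) (Y \<omega>) = H (Y \<omega>, A \<omega>, Z \<omega>)"
      using vals[OF w] g by (auto simp: H_def L_def)
  qed
  also have "\<dots> = (\<Sum>y\<in>{-1,1}. \<Sum>a\<in>{-1,1}. pp y a * (\<integral>z. H (y,a,z) \<partial>nu y))"
    by (rule IF[OF Hm Hb])
  also have "\<dots> = (\<Sum>y\<in>{-1,1}. \<Sum>a\<in>{-1,1}. pp y a * (l (-1) y + (l 1 y - l (-1) y) * J k a y))"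
  proof (intro sum.cong refl)
    fix y a :: real assume y: "y \<in> {-1,1}"
    have "(\<integral>z. H (y,a,z) \<partial>nu y) = (\<integral>z. k (a,z) * l 1 y + (1 - k (a,z)) * l (-1) y \<partial>nu y)"
      using y by (intro Bochner_Integration.integral_cong) (auto simp: H_def L_def)
    then show "pp y a * (\<integral>z. H (y,a,z) \<partial>nu y) = pp y a * (l (-1) y + (l 1 y - l (-1) y) * J k a y)"
      using int_aff[OF k] by simp
  qed
  also have "\<dots> = CL l + (l 1 1 - l (-1) 1) * TP k + (l 1 (-1) - l (-1) (-1)) * FP k"
    unfolding CL_def TP_def FP_def by (simp add: algebra_simps)
  finally show ?thesis .
qed

end




lemma pp_rel: "pp 1 a = exp (2*a) * pp (-1) a"
proof -
  have p: "0 < exp (2*a)" by simp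
  have q: "0 < 1 + exp (2*a)" using p by linarith
  have F: "exp (-2*a*1) = 1 / exp (2*a)" by (simp add: exp_minus inverse_eq_divide)
  have 1: "pp 1 a = 1/(1 + 1/exp(2*a))/2" unfolding pp_def using F by simp
  have 2: "pp (-1) a = 1/(1 + exp(2*a))/2" unfolding pp_def by simp
  show ?thesis unfolding 1 2 using p q by (simp add: field_simps)
qed

abbreviation thrU :: "ereal \<Rightarrow> real \<times> real \<Rightarrow> real" where
  "thrU t \<equiv> (\<lambda>x. if t < ereal (fst x + snd x) then 1 else 0)"
abbreviation thrE :: "ereal \<Rightarrow> real \<times> real \<Rightarrow> real" where
  "thrE t \<equiv> (\<lambda>x. if t < ereal (snd x) then 1 else 0)"

lemma isk_thrU: "isk (thrU t)" unfolding isk_def by auto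
lemma isk_thrE: "isk (thrE t)" unfolding isk_def by auto

lemma NPU:
  assumes k: "isk k" and g: "good t u w"
  shows "0 \<le> u * (TP (thrU t) - TP k) - w * (FP (thrU t) - FP k)"
proof -
  have km[measurable]: "k \<in> borel_measurable borel" using isk_meas[OF k] .
  have N: "0 \<le> u * exp (2*a) * (J (thrU t) a 1 - J k a 1) - w * (J (thrU t) a (-1) - J k a (-1))" for a
    unfolding J_def
  proof (rule NP1)
    fix z
    have "0 \<le> ((if t < ereal (a + z) then 1 else 0) - k (a, z)) * (u * exp (2 * (a + z)) - w)"
      using g isk_bd[OF k, of "(a,z)"] unfolding good_def by blast
    then show "0 \<le> ((if t < ereal (fst (a,z) + snd (a,z)) then 1 else 0) - k (a, z)) * (u * exp (2 * (a + z)) - w)"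
      by simp
  qed (use isk_bd[OF k] in auto)
  have "u * (TP (thrU t) - TP k) - w * (FP (thrU t) - FP k)
     = pp (-1) 1 * (u * exp (2*1) * (J (thrU t) 1 1 - J k 1 1) - w * (J (thrU t) 1 (-1) - J k 1 (-1)))
     + pp (-1) (-1) * (u * exp (2*(-1)) * (J (thrU t) (-1) 1 - J k (-1) 1) - w * (J (thrU t) (-1) (-1) - J k (-1) (-1)))"
    unfolding TP_def FP_def pp_rel[of 1] pp_rel[of "-1"] by (simp add: algebra_simps)
  also have "0 \<le> \<dots>" using N[of 1] N[of "-1"] pp_pos by (intro add_nonneg_nonneg mult_nonneg_nonneg) (auto intro: less_imp_le)
  finally show ?thesis .
qed

lemma NPE:
  assumes k: "isk k" and g: "good t u w"
  shows "0 \<le> u * (J (thrE t) a 1 - J k b 1) - w * (J (thrE t) a (-1) - J k b (-1))"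
proof -
  have km[measurable]: "k \<in> borel_measurable borel" using isk_meas[OF k] .
  have "0 \<le> u * exp (2*0) * ((\<integral>z. thrE t (a,z) \<partial>nu 1) - (\<integral>z. k (b,z) \<partial>nu 1)) - w * ((\<integral>z. thrE t (a,z) \<partial>nu (-1)) - (\<integral>z. k (b,z) \<partial>nu (-1)))"
  proof (rule NP1)
    fix z
    have "0 \<le> ((if t < ereal z then 1 else 0) - k (b, z)) * (u * exp (2 * z) - w)"
      using g isk_bd[OF k, of "(b,z)"] unfolding good_def by blast
    then show "0 \<le> ((if t < ereal (snd (a,z)) then 1 else 0) - k (b, z)) * (u * exp (2 * (0 + z)) - w)"
      by simp
  qed (use isk_bd[OF k] in auto)
  then show ?thesis unfolding J_def by simp
qed

definition Gc :: "real \<Rightarrow> real \<Rightarrow> real" where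
  "Gc y s = measure (nu y) {s<..}"

lemma nu_real_dist: "real_distribution (nu y)"
  unfolding real_distribution_def real_distribution_axioms_def using nu_prob by simp

lemma Gc_cdf: "Gc y s = 1 - cdf (nu y) s"
proof -
  interpret real_distribution "nu y" by (rule nu_real_dist)
  have "{s<..} = space (nu y) - {..s}" by auto
  then show ?thesis unfolding Gc_def cdf_def using prob_compl[of "{..s}"] by simp
qed

lemma Gc_cont: "isCont (Gc y) s"
proof -
  interpret real_distribution "nu y" by (rule nu_real_dist)
  have "emeasure (nu y) {s} = 0"
    unfolding nu_def
    by (subst emeasure_density) (auto intro!: nn_integral_zero' AE_mp[OF AE_lborel_singleton[of s]])
  then have "measure (nu y) {s} = 0" by (simp add: measure_def)
  then have "isCont (cdf (nu y)) s" using isCont_cdf by simp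
  then show ?thesis unfolding Gc_cdf[abs_def] by (intro continuous_intros)
qed

lemma Gc_bot: "(Gc y \<longlongrightarrow> 1) at_bot"
proof -
  interpret real_distribution "nu y" by (rule nu_real_dist)
  have "((\<lambda>s. 1 - cdf (nu y) s) \<longlongrightarrow> 1 - 0) at_bot" by (intro tendsto_intros cdf_lim_at_bot)
  then show ?thesis unfolding Gc_cdf[abs_def] by simp
qed

lemma Gc_top: "(Gc y \<longlongrightarrow> 0) at_top"
proof -
  interpret real_distribution "nu y" by (rule nu_real_dist)
  have "((\<lambda>s. 1 - cdf (nu y) s) \<longlongrightarrow> 1 - 1) at_top" by (intro tendsto_intros cdf_lim_at_top_prob)
  then show ?thesis unfolding Gc_cdf[abs_def] by simp
qed

lemma J_thrU: "J (thrU (ereal t)) a y = Gc y (t - a)"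
proof -
  have "J (thrU (ereal t)) a y = (\<integral>z. indicator {t - a<..} z \<partial>nu y)"
    unfolding J_def by (rule Bochner_Integration.integral_cong) (auto simp: indicator_def)
  then show ?thesis unfolding Gc_def by simp
qed

lemma J_thrE: "J (thrE (ereal t)) a y = Gc y t"
proof -
  have "J (thrE (ereal t)) a y = (\<integral>z. indicator {t<..} z \<partial>nu y)"
    unfolding J_def by (rule Bochner_Integration.integral_cong) (auto simp: indicator_def)
  then show ?thesis unfolding Gc_def by simp
qed

lemma J_minf_U: "J (thrU MInfty) a y = 1" unfolding J_def using nu_UNIV by simp
lemma J_pinf_U: "J (thrU PInfty) a y = 0" unfolding J_def by simp
lemma J_minf_E: "J (thrE MInfty) a y = 1" unfolding J_def using nu_UNIV by simp
lemma J_pinf_E: "J (thrE PInfty) a y = 0" unfolding J_def by simp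

lemma IVT_lim:
  fixes f :: "real \<Rightarrow> real"
  assumes c: "\<And>x. isCont f x" and b: "(f \<longlongrightarrow> L) at_bot" and t: "(f \<longlongrightarrow> 0) at_top"
    and v: "0 < v" "v < L"
  shows "\<exists>x. f x = v"
proof -
  have "eventually (\<lambda>x. v < f x) at_bot" using order_tendstoD(1)[OF b v(2)] .
  then obtain t1 where t1: "\<And>x. x \<le> t1 \<Longrightarrow> v < f x" by (auto simp: eventually_at_bot_linorder)
  have "eventually (\<lambda>x. f x < v) at_top" using order_tendstoD(2)[OF t v(1)] .
  then obtain t2 where t2: "\<And>x. t2 \<le> x \<Longrightarrow> f x < v" by (auto simp: eventually_at_top_linorder)
  have "\<exists>x. min t1 t2 \<le> x \<and> x \<le> max t1 t2 \<and> f x = v"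
    by (rule IVT2) (use t1[of "min t1 t2"] t2[of "max t1 t2"] c in auto)
  then show ?thesis by blast
qed




lemma shT: "filterlim (\<lambda>t::real. t - c) at_top at_top"
  unfolding filterlim_at_top eventually_at_top_linorder
proof
  fix Z show "\<exists>N. \<forall>n\<ge>N. Z \<le> n - c" by (rule exI[of _ "Z + c"]) auto
qed

lemma shB: "filterlim (\<lambda>t::real. t - c) at_bot at_bot"
  unfolding filterlim_at_bot eventually_at_bot_linorder
proof
  fix Z show "\<exists>N. \<forall>n\<le>N. n - c \<le> Z" by (rule exI[of _ "Z + c"]) auto
qed

lemma GcS_cont: "isCont (\<lambda>t. Gc y (t - c)) x"
  by (rule isCont_o2[OF _ Gc_cont]) (intro continuous_intros)
lemma GcS_top: "((\<lambda>t. Gc y (t - c)) \<longlongrightarrow> 0) at_top"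
  by (rule filterlim_compose[OF Gc_top shT])
lemma GcS_bot: "((\<lambda>t. Gc y (t - c)) \<longlongrightarrow> 1) at_bot"
  by (rule filterlim_compose[OF Gc_bot shB])

lemma aux1: "(0::real) \<le> 1 * (x1 - x2) - x3 \<Longrightarrow> 0 \<le> x3 \<Longrightarrow> x2 \<le> x1" by simp

lemma good_minf: "good MInfty 1 0"
  unfolding good_def by auto

lemma FP_thrU: "FP (thrU (ereal t)) = pp (-1) 1 * Gc (-1) (t - 1) + pp (-1) (-1) * Gc (-1) (t - (-1))"
  by (simp only: FP_def J_thrU)
lemma TP_thrU: "TP (thrU (ereal t)) = pp 1 1 * Gc 1 (t - 1) + pp 1 (-1) * Gc 1 (t - (-1))"
  by (simp only: TP_def J_thrU)

lemma FPU_cont: "isCont (\<lambda>t. FP (thrU (ereal t))) x"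
  unfolding FP_thrU by (intro continuous_intros GcS_cont)
lemma FPU_bot: "((\<lambda>t. FP (thrU (ereal t))) \<longlongrightarrow> 1/2) at_bot"
proof -
  have "((\<lambda>t. pp (-1) 1 * Gc (-1) (t - 1) + pp (-1) (-1) * Gc (-1) (t - (-1))) \<longlongrightarrow> pp (-1) 1 * 1 + pp (-1) (-1) * 1) at_bot"
    by (intro tendsto_intros GcS_bot)
  then show ?thesis unfolding FP_thrU using pp_sum[of "-1"] by simp
qed
lemma FPU_top: "((\<lambda>t. FP (thrU (ereal t))) \<longlongrightarrow> 0) at_top"
proof -
  have "((\<lambda>t. pp (-1) 1 * Gc (-1) (t - 1) + pp (-1) (-1) * Gc (-1) (t - (-1))) \<longlongrightarrow> pp (-1) 1 * 0 + pp (-1) (-1) * 0) at_top"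
    by (intro tendsto_intros GcS_top)
  then show ?thesis unfolding FP_thrU by simp
qed
lemma TPU_top: "((\<lambda>t. TP (thrU (ereal t))) \<longlongrightarrow> 0) at_top"
proof -
  have "((\<lambda>t. pp 1 1 * Gc 1 (t - 1) + pp 1 (-1) * Gc 1 (t - (-1))) \<longlongrightarrow> pp 1 1 * 0 + pp 1 (-1) * 0) at_top"
    by (intro tendsto_intros GcS_top)
  then show ?thesis unfolding TP_thrU by simp
qed

lemma FP_nonneg: "isk k \<Longrightarrow> 0 \<le> FP k"
  unfolding FP_def using J_bd pp_pos by (intro add_nonneg_nonneg mult_nonneg_nonneg) (auto intro: less_imp_le)

lemma FP_minf: "FP (\<lambda>x. 1) = 1/2" using J_minf_U unfolding FP_def using pp_sum[of "-1"] by simp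
lemma TP_minf: "TP (\<lambda>x. 1) = 1/2" using J_minf_U unfolding TP_def using pp_sum[of 1] by simp
lemma FP_pinf: "FP (\<lambda>x. 0) = 0" using J_pinf_U unfolding FP_def by simp
lemma TP_pinf: "TP (\<lambda>x. 0) = 0" using J_pinf_U unfolding TP_def by simp

lemma J_thrE_a: "J (thrE t) a y = J (thrE t) 1 y" unfolding J_def by simp

lemma TP_eo: "J k (-1) 1 = J k 1 1 \<Longrightarrow> TP k = J k 1 1 / 2"
proof -
  assume "J k (-1) 1 = J k 1 1"
  then have "TP k = (pp 1 1 + pp 1 (-1)) * J k 1 1" unfolding TP_def by (simp add: algebra_simps)
  then show ?thesis by (simp add: pp_sum)
qed
lemma FP_eo: "J k (-1) (-1) = J k 1 (-1) \<Longrightarrow> FP k = J k 1 (-1) / 2"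
proof -
  assume "J k (-1) (-1) = J k 1 (-1)"
  then have "FP k = (pp (-1) 1 + pp (-1) (-1)) * J k 1 (-1)" unfolding FP_def by (simp add: algebra_simps)
  then show ?thesis by (simp add: pp_sum)
qed

context model
begin

lemma main_U:
  assumes F: "\<And>g. rand_clf M F g \<Longrightarrow> \<exists>k. isk k \<and> (\<forall>\<omega>\<in>space M. g \<omega> = k (A \<omega>, Z \<omega>))"
    and S: "\<forall>\<omega>\<in>space M. S \<omega> = A \<omega> + Z \<omega>"
  shows "opt_unconstrained_score M Y F S"
proof -
  have thr: "\<forall>\<omega>\<in>space M. thresh S t \<omega> = thrU t (A \<omega>, Z \<omega>)" for t using S by (simp add: thresh_def)
  have tprT: "tpr M Y (thresh S t) = 2 * TP (thrU t)" for t by (rule tpr_k[OF isk_thrU thr])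
  have fprT: "fpr M Y (thresh S t) = 2 * FP (thrU t)" for t by (rule fpr_k[OF isk_thrU thr])
  have lossT: "exp_loss M Y l (thresh S t) = CL l + (l 1 1 - l (-1) 1) * TP (thrU t) + (l 1 (-1) - l (-1) (-1)) * FP (thrU t)" for l t
    by (rule loss_k[OF isk_thrU thr])
  show ?thesis unfolding opt_unconstrained_score_def
  proof (intro conjI allI impI)
    fix g assume "rand_clf M F g"
    then obtain k where k: "isk k" and gk: "\<forall>\<omega>\<in>space M. g \<omega> = k (A \<omega>, Z \<omega>)" using F by blast
    have tg: "tpr M Y g = 2 * TP k" and fg: "fpr M Y g = 2 * FP k" using tpr_k[OF k gk] fpr_k[OF k gk] by auto
    show "\<exists>t. fpr M Y (thresh S t) \<le> fpr M Y g \<and> tpr M Y g \<le> tpr M Y (thresh S t)"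
    proof (cases "FP k \<ge> 1/2")
      case True
      have "0 \<le> 1 * (TP (thrU MInfty) - TP k) - 0 * (FP (thrU MInfty) - FP k)" by (rule NPU[OF k good_minf])
      then have "fpr M Y (thresh S MInfty) \<le> fpr M Y g \<and> tpr M Y g \<le> tpr M Y (thresh S MInfty)"
        unfolding tprT fprT tg fg using True by (simp add: FP_minf TP_minf)
      then show ?thesis by blast
    next
      case False
      show ?thesis
      proof (cases "FP k \<le> 0")
        case True
        have le: "TP k \<le> TP (thrU (ereal r))" for r
        proof -
          have "0 \<le> 1 * (TP (thrU (ereal r)) - TP k) - exp (2*r) * (FP (thrU (ereal r)) - FP k)" by (rule NPU[OF k good_real])
          moreover have "0 \<le> exp (2*r) * (FP (thrU (ereal r)) - FP k)"
          proof -
            have "0 \<le> FP (thrU (ereal r))" by (rule FP_nonneg[OF isk_thrU])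
            then have "0 \<le> FP (thrU (ereal r)) - FP k" using True by linarith
            then show ?thesis by (rule mult_nonneg_nonneg[OF less_imp_le[OF exp_gt_zero]])
          qed
          ultimately show ?thesis by (rule aux1)
        qed
        have "TP k \<le> 0" by (rule tendsto_lowerbound[OF TPU_top]) (use le in auto)
        then have "fpr M Y (thresh S PInfty) \<le> fpr M Y g \<and> tpr M Y g \<le> tpr M Y (thresh S PInfty)"
          unfolding tprT fprT tg fg using True FP_nonneg[OF k] by (simp add: FP_pinf TP_pinf)
        then show ?thesis by blast
      next
        case False2: False
        obtain t where t: "FP (thrU (ereal t)) = FP k"
          using IVT_lim[OF FPU_cont FPU_bot FPU_top, of "FP k"] False False2 by auto
        have "0 \<le> 1 * (TP (thrU (ereal t)) - TP k) - exp (2*t) * (FP (thrU (ereal t)) - FP k)" by (rule NPU[OF k good_real])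
        then have "fpr M Y (thresh S (ereal t)) \<le> fpr M Y g \<and> tpr M Y g \<le> tpr M Y (thresh S (ereal t))"
          unfolding tprT fprT tg fg using t by simp
        then show ?thesis by blast
      qed
    qed
  next
    fix l :: "real \<Rightarrow> real \<Rightarrow> real" assume l: "loss_fn l"
    obtain t where t: "good t (l (-1) 1 - l 1 1) (l 1 (-1) - l (-1) (-1))" using good_ex[of "l (-1) 1 - l 1 1" "l 1 (-1) - l (-1) (-1)"] l by (auto simp: loss_fn_def)
    show "\<exists>t. \<forall>g. rand_clf M F g \<longrightarrow> exp_loss M Y l (thresh S t) \<le> exp_loss M Y l g"
    proof (intro exI allI impI)
      fix g assume "rand_clf M F g"
      then obtain k where k: "isk k" and gk: "\<forall>\<omega>\<in>space M. g \<omega> = k (A \<omega>, Z \<omega>)" using F by blast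
      have "0 \<le> (l (-1) 1 - l 1 1) * (TP (thrU t) - TP k) - (l 1 (-1) - l (-1) (-1)) * (FP (thrU t) - FP k)"
        by (rule NPU[OF k t])
      then show "exp_loss M Y l (thresh S t) \<le> exp_loss M Y l g"
        unfolding lossT loss_k[OF k gk] by (simp add: algebra_simps)
    qed
  qed
qed

lemma eo_Z: "eo_score M Y A Z"
  unfolding eo_score_def
proof (intro ballI)
  fix y a :: real and B :: "real set" assume y: "y \<in> {-1,1}" and a: "a \<in> {-1,1}" and B: "B \<in> sets borel"
  have 1: "prob {\<omega>\<in>space M. Z \<omega> \<in> B \<and> A \<omega> = a \<and> Y \<omega> = y} = pp y a * measure (nu y) B"
  proof -
    have "{\<omega>\<in>space M. Z \<omega> \<in> B \<and> A \<omega> = a \<and> Y \<omega> = y} = {\<omega>\<in>space M. Y \<omega> = y \<and> A \<omega> = a \<and> Z \<omega> \<in> B}" by auto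
    then show ?thesis using law[OF y a B] by simp
  qed
  have 2: "prob {\<omega>\<in>space M. A \<omega> = a \<and> Y \<omega> = y} = pp y a"
  proof -
    have "{\<omega>\<in>space M. A \<omega> = a \<and> Y \<omega> = y} = {\<omega>\<in>space M. Y \<omega> = y \<and> A \<omega> = a}" by auto
    then show ?thesis using meas_ya[OF y a] by simp
  qed
  have 3: "prob {\<omega>\<in>space M. Z \<omega> \<in> B \<and> Y \<omega> = y} = measure (nu y) B / 2"
  proof -
    have E: "{x :: real \<times> real \<times> real. fst x = y \<and> snd (snd x) \<in> B} \<in> sets borel" using B by measurable
    have "{\<omega>\<in>space M. Z \<omega> \<in> B \<and> Y \<omega> = y} = {\<omega>\<in>space M. (Y \<omega>, A \<omega>, Z \<omega>) \<in> {x. fst x = y \<and> snd (snd x) \<in> B}}" by auto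
    also have "prob \<dots> = (\<Sum>y'\<in>{-1,1}. \<Sum>a\<in>{-1,1}. pp y' a * measure (nu y') {z. (y',a,z) \<in> {x. fst x = y \<and> snd (snd x) \<in> B}})"
      by (rule IFm[OF E])
    also have "\<dots> = (\<Sum>y'\<in>{-1,1}. \<Sum>a\<in>{-1,1}. pp y' a * (if y' = y then measure (nu y) B else 0))"
      by (intro sum.cong refl) auto
    also have "\<dots> = (pp y 1 + pp y (-1)) * measure (nu y) B" using y by (auto simp: algebra_simps)
    also have "\<dots> = measure (nu y) B / 2" by (simp add: pp_sum)
    finally show ?thesis .
  qed
  show "prob {\<omega>\<in>space M. Z \<omega> \<in> B \<and> A \<omega> = a \<and> Y \<omega> = y} * prob {\<omega>\<in>space M. Y \<omega> = y}
      = prob {\<omega>\<in>space M. Z \<omega> \<in> B \<and> Y \<omega> = y} * prob {\<omega>\<in>space M. A \<omega> = a \<and> Y \<omega> = y}"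
    unfolding 1 2 3 meas_y[OF y] by simp
qed

end




lemma aux2:
  fixes p q r s a b c d C :: real
  assumes h: "0 \<le> (p - q) * (a - c) - (r - s) * (b - d)"
  shows "C + (q - p) * (a / 2) + (r - s) * (b / 2) \<le> C + (q - p) * (c / 2) + (r - s) * (d / 2)"
proof -
  have "C + (q - p) * (c / 2) + (r - s) * (d / 2) - (C + (q - p) * (a / 2) + (r - s) * (b / 2))
      = ((p - q) * (a - c) - (r - s) * (b - d)) / 2" by (simp add: field_simps)
  moreover have gen: "\<And>X Y H::real. Y - X = H/2 \<Longrightarrow> 0 \<le> H \<Longrightarrow> X \<le> Y" by linarith
  ultimately show ?thesis using h by blast
qed

lemma Gc_nonneg: "0 \<le> Gc y t" unfolding Gc_def by simp

context model
begin

lemma main_E: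
  assumes F: "\<And>g. rand_clf M F g \<Longrightarrow> \<exists>k. isk k \<and> (\<forall>\<omega>\<in>space M. g \<omega> = k (A \<omega>, Z \<omega>))"
  shows "opt_eo_score M Y A F Z"
proof -
  have thr: "\<forall>\<omega>\<in>space M. thresh Z t \<omega> = thrE t (A \<omega>, Z \<omega>)" for t by (simp add: thresh_def)
  have TPT: "TP (thrE t) = J (thrE t) 1 1 / 2" for t by (rule TP_eo) (rule J_thrE_a)
  have FPT: "FP (thrE t) = J (thrE t) 1 (-1) / 2" for t by (rule FP_eo) (rule J_thrE_a)
  have tprT: "tpr M Y (thresh Z t) = J (thrE t) 1 1" for t using tpr_k[OF isk_thrE thr] TPT by simp
  have fprT: "fpr M Y (thresh Z t) = J (thrE t) 1 (-1)" for t using fpr_k[OF isk_thrE thr] FPT by simp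
  have lossT: "exp_loss M Y l (thresh Z t) = CL l + (l 1 1 - l (-1) 1) * (J (thrE t) 1 1 / 2) + (l 1 (-1) - l (-1) (-1)) * (J (thrE t) 1 (-1) / 2)" for l t
    using loss_k[OF isk_thrE thr] TPT FPT by simp
  have eoT: "eo_clf M Y A (thresh Z t)" for t
    unfolding eo_clf_def using grp_k[OF isk_thrE thr] J_thrE_a[of t "-1"] by auto
  have eok: "J k (-1) y = J k 1 y" if k: "isk k" and gk: "\<forall>\<omega>\<in>space M. g \<omega> = k (A \<omega>, Z \<omega>)" and e: "eo_clf M Y A g"
    and y: "y \<in> {-1,1}" for k g y
    using e y unfolding eo_clf_def using grp_k[OF k gk y] by auto
  show ?thesis unfolding opt_eo_score_def
  proof (intro conjI allI impI eo_Z)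
    fix g assume ge: "rand_clf M F g \<and> eo_clf M Y A g"
    then obtain k where k: "isk k" and gk: "\<forall>\<omega>\<in>space M. g \<omega> = k (A \<omega>, Z \<omega>)" using F by blast
    have e1: "J k (-1) 1 = J k 1 1" and e2: "J k (-1) (-1) = J k 1 (-1)" using eok[OF k gk] ge by auto
    have tg: "tpr M Y g = J k 1 1" using tpr_k[OF k gk] TP_eo[OF e1] by simp
    have fg: "fpr M Y g = J k 1 (-1)" using fpr_k[OF k gk] FP_eo[OF e2] by simp
    show "\<exists>t. fpr M Y (thresh Z t) \<le> fpr M Y g \<and> tpr M Y g \<le> tpr M Y (thresh Z t)"
    proof (cases "J k 1 (-1) \<ge> 1")
      case True
      have "0 \<le> 1 * (J (thrE MInfty) 1 1 - J k 1 1) - 0 * (J (thrE MInfty) 1 (-1) - J k 1 (-1))"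
        by (rule NPE[OF k good_minf])
      then have "fpr M Y (thresh Z MInfty) \<le> fpr M Y g \<and> tpr M Y g \<le> tpr M Y (thresh Z MInfty)"
        unfolding tprT fprT tg fg J_minf_E using True by simp
      then show ?thesis by blast
    next
      case False
      show ?thesis
      proof (cases "J k 1 (-1) \<le> 0")
        case True
        have le: "J k 1 1 \<le> Gc 1 r" for r
        proof -
          have "0 \<le> 1 * (J (thrE (ereal r)) 1 1 - J k 1 1) - exp (2*r) * (J (thrE (ereal r)) 1 (-1) - J k 1 (-1))"
            by (rule NPE[OF k good_real])
          then have "0 \<le> 1 * (Gc 1 r - J k 1 1) - exp (2*r) * (Gc (-1) r - J k 1 (-1))"
            by (simp only: J_thrE)
          moreover have "0 \<le> exp (2*r) * (Gc (-1) r - J k 1 (-1))"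
          proof -
            have "0 \<le> Gc (-1) r - J k 1 (-1)" using True Gc_nonneg[of "-1" r] by linarith
            then show ?thesis by (rule mult_nonneg_nonneg[OF less_imp_le[OF exp_gt_zero]])
          qed
          ultimately show ?thesis by (rule aux1)
        qed
        have "J k 1 1 \<le> 0" by (rule tendsto_lowerbound[OF Gc_top[of 1]]) (use le in auto)
        then have "fpr M Y (thresh Z PInfty) \<le> fpr M Y g \<and> tpr M Y g \<le> tpr M Y (thresh Z PInfty)"
          unfolding tprT fprT tg fg J_pinf_E using True J_bd[OF k, of 1 "-1"] by simp
        then show ?thesis by blast
      next
        case False2: False
        obtain t where t: "Gc (-1) t = J k 1 (-1)"
          using IVT_lim[OF Gc_cont Gc_bot Gc_top, of "J k 1 (-1)"] False False2 by auto
        have "0 \<le> 1 * (J (thrE (ereal t)) 1 1 - J k 1 1) - exp (2*t) * (J (thrE (ereal t)) 1 (-1) - J k 1 (-1))"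
          by (rule NPE[OF k good_real])
        then have "fpr M Y (thresh Z (ereal t)) \<le> fpr M Y g \<and> tpr M Y g \<le> tpr M Y (thresh Z (ereal t))"
          unfolding tprT fprT tg fg J_thrE using t by simp
        then show ?thesis by blast
      qed
    qed
  next
    fix l :: "real \<Rightarrow> real \<Rightarrow> real" assume l: "loss_fn l"
    obtain t where t: "good t (l (-1) 1 - l 1 1) (l 1 (-1) - l (-1) (-1))"
      using good_ex[of "l (-1) 1 - l 1 1" "l 1 (-1) - l (-1) (-1)"] l by (auto simp: loss_fn_def)
    show "\<exists>t. eo_clf M Y A (thresh Z t) \<and> (\<forall>g. rand_clf M F g \<and> eo_clf M Y A g \<longrightarrow> exp_loss M Y l (thresh Z t) \<le> exp_loss M Y l g)"
    proof (intro exI conjI allI impI)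
      show "eo_clf M Y A (thresh Z t)" by (rule eoT)
      fix g assume ge: "rand_clf M F g \<and> eo_clf M Y A g"
      then obtain k where k: "isk k" and gk: "\<forall>\<omega>\<in>space M. g \<omega> = k (A \<omega>, Z \<omega>)" using F by blast
      have e1: "J k (-1) 1 = J k 1 1" and e2: "J k (-1) (-1) = J k 1 (-1)" using eok[OF k gk] ge by auto
      have lg: "exp_loss M Y l g = CL l + (l 1 1 - l (-1) 1) * (J k 1 1 / 2) + (l 1 (-1) - l (-1) (-1)) * (J k 1 (-1) / 2)"
        using loss_k[OF k gk] TP_eo[OF e1] FP_eo[OF e2] by simp
      have "0 \<le> (l (-1) 1 - l 1 1) * (J (thrE t) 1 1 - J k 1 1) - (l 1 (-1) - l (-1) (-1)) * (J (thrE t) 1 (-1) - J k 1 (-1))"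
        by (rule NPE[OF k t])
      then show "exp_loss M Y l (thresh Z t) \<le> exp_loss M Y l g"
        unfolding lossT lg by (rule aux2)
    qed
  qed
qed

end




lemma nd_shift: "normal_density (m + c) 1 (c + x) = normal_density m 1 x"
  unfolding normal_density_def by (simp add: algebra_simps)

lemma nu_shift:
  assumes B: "B \<in> sets borel"
  shows "(\<integral>x. normal_density (c + y) 1 x * indicator B (x - c) \<partial>lborel) = measure (nu y) B"
proof -
  have "(\<integral>x. normal_density (c + y) 1 x * indicator B (x - c) \<partial>lborel)
      = \<bar>1\<bar> *\<^sub>R (\<integral>x. normal_density (c + y) 1 (c + 1 * x) * indicator B (c + 1 * x - c) \<partial>lborel)"
    by (rule lborel_integral_real_affine) simp
  also have "\<dots> = (\<integral>x. normal_density y 1 x * indicator B x \<partial>lborel)"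
    using nd_shift[of y c] by (simp add: add.commute)
  also have "\<dots> = (\<integral>x. indicator B x \<partial>nu y)"
    using integral_nu[of "indicator B" y] B by simp
  also have "\<dots> = measure (nu y) B" by simp
  finally show ?thesis .
qed

lemma measure_density_LINT:
  fixes g :: "real \<Rightarrow> real"
  assumes [measurable]: "g \<in> borel_measurable borel" and g0: "\<And>x. 0 \<le> g x" and gi: "integrable lborel g"
    and B[measurable]: "B \<in> sets borel"
  shows "measure (density lborel (\<lambda>x. ennreal (g x))) B = (LINT x:B|lborel. g x)"
proof -
  have i: "integrable lborel (\<lambda>x. g x * indicator B x)"
    using integrable_mult_indicator[of B lborel g] B gi by (simp add: mult.commute)
  have "emeasure (density lborel (\<lambda>x. ennreal (g x))) B = (\<integral>\<^sup>+x. ennreal (g x * indicator B x) \<partial>lborel)"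
    by (subst emeasure_density) (auto intro!: nn_integral_cong simp: indicator_def)
  also have "\<dots> = ennreal (\<integral>x. g x * indicator B x \<partial>lborel)"
    using i g0 by (intro nn_integral_eq_integral) auto
  finally have "measure (density lborel (\<lambda>x. ennreal (g x))) B = (\<integral>x. g x * indicator B x \<partial>lborel)"
    using g0 by (simp add: measure_def integral_nonneg_AE)
  then show ?thesis unfolding set_lebesgue_integral_def by (simp add: mult.commute)
qed

lemma finite_density:
  fixes g :: "real \<Rightarrow> real"
  assumes [measurable]: "g \<in> borel_measurable borel" and g0: "\<And>x. 0 \<le> g x" and gi: "integrable lborel g"
  shows "finite_measure (density lborel (\<lambda>x. ennreal (g x)))"
proof (rule finite_measureI)
  have "emeasure (density lborel (\<lambda>x. ennreal (g x))) (space (density lborel (\<lambda>x. ennreal (g x))))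
      = (\<integral>\<^sup>+x. ennreal (g x) \<partial>lborel)"
    by (subst emeasure_density) (auto intro!: nn_integral_cong)
  also have "\<dots> = ennreal (\<integral>x. g x \<partial>lborel)" using gi g0 by (intro nn_integral_eq_integral) auto
  finally show "emeasure (density lborel (\<lambda>x. ennreal (g x))) (space (density lborel (\<lambda>x. ennreal (g x)))) \<noteq> \<infinity>"
    by simp
qed




lemma nd_rel2: "normal_density (a+1) 1 x = normal_density (a-1) 1 x * exp (2*(x-a))"
proof -
  have e: "-(x-(a+1))\<^sup>2/2 = -(x-(a-1))\<^sup>2/2 + 2*(x-a)" by (simp add: power2_eq_square field_simps)
  have "exp (-(x-(a+1))\<^sup>2/2) = exp (-(x-(a-1))\<^sup>2/2) * exp (2*(x-a))"
    unfolding e exp_add by simp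
  then show ?thesis unfolding normal_density_def by simp
qed

lemma cancel_aux: "(d::real) \<noteq> 0 \<Longrightarrow> x*d/c*(y/d) = x*y/c"
  by (cases "c = 0") (simp_all add: field_simps)

lemma aux3: "2 * (x / 2) * y = x * (y::real)" by simp

lemma mix_id:
  assumes y: "y \<in> {-1,1}"
  shows "(1 / (1 + exp (-2*a)) * normal_density (a+1) 1 x + 1 / (1 + exp (2*a)) * normal_density (a-1) 1 x)
          * (1 / (1 + exp (-2 * y * x))) = 2 * pp y a * normal_density (a + y) 1 x"
proof -
  define u where "u = normal_density (a-1) 1 x"
  define E where "E = exp (2*x)"
  define F where "F = exp (2*a)"
  have u: "0 < u" unfolding u_def by (simp add: normal_density_pos)
  have E: "0 < E" unfolding E_def by simp
  have F: "0 < F" unfolding F_def by simp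
  have n1: "normal_density (a+1) 1 x = u * (E / F)"
    unfolding nd_rel2 u_def E_def F_def by (simp add: exp_diff[symmetric] algebra_simps)
  have f1: "exp (-2*a) = 1 / F" unfolding F_def by (simp add: exp_minus inverse_eq_divide)
  have f2: "exp (2*a) = F" unfolding F_def ..
  have FF: "0 < F + F * F" by (rule add_pos_pos[OF F mult_pos_pos[OF F F]])
  have EE: "0 < E + E * E" by (rule add_pos_pos[OF E mult_pos_pos[OF E E]])
  have F1: "1 + F \<noteq> 0" "F \<noteq> 0" "F + F * F \<noteq> 0" using F FF by linarith+
  have E1: "1 + E \<noteq> 0" "E \<noteq> 0" "E + E * E \<noteq> 0" using E EE by linarith+
  have g1: "1/(1+1/F) = F/(1+F)" using F by (simp add: field_simps)
  have g2: "1/(1+1/E) = E/(1+E)" using E by (simp add: field_simps)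
  have s1: "F/(1+F) * (u * (E/F)) = u*E/(1+F)" using F1 by (simp add: field_simps)
  have s2: "u*E/(1+F) + 1/(1+F)*u = u*(1+E)/(1+F)"
  proof -
    have "u*E/(1+F) + 1/(1+F)*u = (u*E + u)/(1+F)" by (simp add: add_divide_distrib)
    also have "u*E + u = u*(1+E)" by (simp add: algebra_simps)
    finally show ?thesis .
  qed
  show ?thesis
  proof (cases "y = 1")
    case True
    have e1: "exp (-2 * y * x) = 1 / E" unfolding E_def True by (simp add: exp_minus inverse_eq_divide)
    have p: "pp 1 a = 1 / (1 + 1 / F) / 2" unfolding pp_def using f1 by simp
    have "(1 / (1 + exp (-2*a)) * normal_density (a+1) 1 x + 1 / (1 + exp (2*a)) * normal_density (a-1) 1 x)
          * (1 / (1 + exp (-2 * y * x))) = (1 / (1 + 1/F) * (u * (E/F)) + 1 / (1 + F) * u) * (1 / (1 + 1/E))"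
      unfolding f1 f2 n1 e1 u_def ..
    also have "\<dots> = (F/(1+F) * (u * (E/F)) + 1 / (1 + F) * u) * (E/(1+E))" unfolding g1 g2 ..
    also have "\<dots> = u*(1+E)/(1+F) * (E/(1+E))" unfolding s1 s2 ..
    also have "\<dots> = u*E/(1+F)" by (rule cancel_aux) (use E1 in simp)
    also have "\<dots> = 2 * (F/(1+F) / 2) * (u * (E / F))"
    proof -
      have h: "2 * (F/(1+F) / 2) * (u * (E / F)) = F/(1+F) * (u * (E / F))" by (rule aux3)
      show ?thesis by (simp only: h s1)
    qed
    also have "\<dots> = 2 * (1 / (1 + 1 / F) / 2) * (u * (E / F))" unfolding g1 ..
    also have "\<dots> = 2 * pp y a * normal_density (a + y) 1 x" unfolding True p n1 ..
    finally show ?thesis .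
  next
    case False
    then have yy: "y = -1" using y by auto
    have e1: "exp (-2 * y * x) = E" unfolding E_def yy by simp
    have p: "pp y a = 1 / (1 + F) / 2" unfolding pp_def yy F_def by simp
    have n2: "normal_density (a + y) 1 x = u" unfolding yy u_def by simp
    have "(1 / (1 + exp (-2*a)) * normal_density (a+1) 1 x + 1 / (1 + exp (2*a)) * normal_density (a-1) 1 x)
          * (1 / (1 + exp (-2 * y * x))) = (1 / (1 + 1/F) * (u * (E/F)) + 1 / (1 + F) * u) * (1 / (1 + E))"
      unfolding f1 f2 n1 e1 u_def ..
    also have "\<dots> = (F/(1+F) * (u * (E/F)) + 1 / (1 + F) * u) * (1 / (1 + E))" unfolding g1 ..
    also have "\<dots> = u*(1+E)/(1+F) * (1/(1+E))" unfolding s1 s2 ..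
    also have "\<dots> = u*1/(1+F)" by (rule cancel_aux) (use E1 in simp)
    also have "\<dots> = 2 * (1 / (1 + F) / 2) * u" by (simp only: aux3) simp
    also have "\<dots> = 2 * pp y a * normal_density (a + y) 1 x" unfolding p n2 ..
    finally show ?thesis .
  qed
qed




lemma (in model) distr_formula:
  fixes E :: "(real \<times> real \<times> real \<times> real) set"
  assumes E[measurable]: "E \<in> sets borel"
  shows "emeasure (distr M borel (\<lambda>\<omega>. (Y \<omega>, A \<omega>, A \<omega> + Z \<omega>, Z \<omega>))) E
     = ennreal (\<Sum>y\<in>{-1,1}. \<Sum>a\<in>{-1,1}. pp y a * measure (nu y) {z. (y, a, a + z, z) \<in> E})"
proof -
  define E' where "E' = {x :: real \<times> real \<times> real. (fst x, fst (snd x), fst (snd x) + snd (snd x), snd (snd x)) \<in> E}"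
  have E'm: "E' \<in> sets borel" unfolding E'_def by measurable
  have "emeasure (distr M borel (\<lambda>\<omega>. (Y \<omega>, A \<omega>, A \<omega> + Z \<omega>, Z \<omega>))) E
      = emeasure M ((\<lambda>\<omega>. (Y \<omega>, A \<omega>, A \<omega> + Z \<omega>, Z \<omega>)) -` E \<inter> space M)"
    by (rule emeasure_distr) measurable
  also have "(\<lambda>\<omega>. (Y \<omega>, A \<omega>, A \<omega> + Z \<omega>, Z \<omega>)) -` E \<inter> space M = {\<omega>\<in>space M. (Y \<omega>, A \<omega>, Z \<omega>) \<in> E'}"
    unfolding E'_def by auto
  also have "emeasure M \<dots> = ennreal (prob {\<omega>\<in>space M. (Y \<omega>, A \<omega>, Z \<omega>) \<in> E'})"
    by (simp add: emeasure_eq_measure)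
  also have "prob {\<omega>\<in>space M. (Y \<omega>, A \<omega>, Z \<omega>) \<in> E'} = (\<Sum>y\<in>{-1,1}. \<Sum>a\<in>{-1,1}. pp y a * measure (nu y) {z. (y,a,z) \<in> E'})"
    by (rule IFm[OF E'm])
  also have "\<dots> = (\<Sum>y\<in>{-1,1}. \<Sum>a\<in>{-1,1}. pp y a * measure (nu y) {z. (y, a, a + z, z) \<in> E})"
    unfolding E'_def by simp
  finally show ?thesis .
qed

lemma distr_eq:
  assumes m1: "model M Y A Z" and m2: "model M' Y' A' Z'"
  shows "distr M borel (\<lambda>\<omega>. (Y \<omega>, A \<omega>, A \<omega> + Z \<omega>, Z \<omega>)) = distr M' borel (\<lambda>\<omega>. (Y' \<omega>, A' \<omega>, A' \<omega> + Z' \<omega>, Z' \<omega>))"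
proof (rule measure_eqI)
  show "sets (distr M borel (\<lambda>\<omega>. (Y \<omega>, A \<omega>, A \<omega> + Z \<omega>, Z \<omega>))) = sets (distr M' borel (\<lambda>\<omega>. (Y' \<omega>, A' \<omega>, A' \<omega> + Z' \<omega>, Z' \<omega>)))"
    by simp
  fix E assume "E \<in> sets (distr M borel (\<lambda>\<omega>. (Y \<omega>, A \<omega>, A \<omega> + Z \<omega>, Z \<omega>)))"
  then have E: "E \<in> sets borel" by simp
  show "emeasure (distr M borel (\<lambda>\<omega>. (Y \<omega>, A \<omega>, A \<omega> + Z \<omega>, Z \<omega>))) E = emeasure (distr M' borel (\<lambda>\<omega>. (Y' \<omega>, A' \<omega>, A' \<omega> + Z' \<omega>, Z' \<omega>))) E"
    unfolding model.distr_formula[OF m1 E] model.distr_formula[OF m2 E] ..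
qed

lemma scen1_model:
  fixes M :: "'a measure" and A Y N X2 :: "'a \<Rightarrow> real"
  assumes P1: "prob_space M"
    and meas1: "A \<in> borel_measurable M" "Y \<in> borel_measurable M" "N \<in> borel_measurable M"
    and vals1: "\<forall>\<omega>\<in>space M. A \<omega> \<in> {-1,1} \<and> Y \<omega> \<in> {-1,1}"
    and A1: "measure M {\<omega>\<in>space M. A \<omega> = 1} = 1/2"
    and YA1: "\<forall>a\<in>{-1,1}. \<forall>y\<in>{-1,1}.
       measure M {\<omega>\<in>space M. Y \<omega> = y \<and> A \<omega> = a}
         = 1 / (1 + exp (-2*a*y)) * measure M {\<omega>\<in>space M. A \<omega> = a}"
    and N1: "distributed M lborel N (\<lambda>x. ennreal (normal_density 0 1 x))"
    and indN: "\<forall>a\<in>{-1,1}. \<forall>y\<in>{-1,1}. \<forall>B\<in>sets borel.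
       measure M {\<omega>\<in>space M. N \<omega> \<in> B \<and> A \<omega> = a \<and> Y \<omega> = y}
         = measure M {\<omega>\<in>space M. N \<omega> \<in> B} * measure M {\<omega>\<in>space M. A \<omega> = a \<and> Y \<omega> = y}"
    and X2: "\<forall>\<omega>\<in>space M. X2 \<omega> = Y \<omega> + N \<omega>"
  shows "model M Y A X2"
proof -
  interpret prob_space M by (rule P1)
  have [measurable]: "A \<in> borel_measurable M" "Y \<in> borel_measurable M" "N \<in> borel_measurable M" using meas1 by auto
  have mX2: "X2 \<in> borel_measurable M"
  proof -
    have "(\<lambda>\<omega>. Y \<omega> + N \<omega>) \<in> borel_measurable M" by measurable
    then show ?thesis by (subst measurable_cong[where g="\<lambda>\<omega>. Y \<omega> + N \<omega>"]) (auto simp: X2)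
  qed
  have pA: "prob {\<omega>\<in>space M. A \<omega> = a} = 1/2" if a: "a \<in> {-1,1}" for a
  proof (cases "a = 1")
    case True then show ?thesis using A1 by simp
  next
    case False
    then have aa: "a = -1" using a by auto
    have "{\<omega>\<in>space M. A \<omega> = a} = space M - {\<omega>\<in>space M. A \<omega> = 1}" using vals1 aa by auto
    also have "prob \<dots> = 1 - prob {\<omega>\<in>space M. A \<omega> = 1}" by (rule prob_compl) measurable
    finally show ?thesis using A1 by simp
  qed
  show ?thesis
  proof (unfold_locales)
    show "X2 \<in> borel_measurable M" by (rule mX2)
    show "\<And>\<omega>. \<omega> \<in> space M \<Longrightarrow> Y \<omega> \<in> {-1,1} \<and> A \<omega> \<in> {-1,1}" using vals1 by auto
  next
    fix y a :: real and B :: "real set" assume y: "y \<in> {-1,1}" and a: "a \<in> {-1,1}" and B[measurable]: "B \<in> sets borel"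
    define Bs where "Bs = {n. y + n \<in> B}"
    have Bs[measurable]: "Bs \<in> sets borel" unfolding Bs_def by measurable
    have "{\<omega>\<in>space M. Y \<omega> = y \<and> A \<omega> = a \<and> X2 \<omega> \<in> B} = {\<omega>\<in>space M. N \<omega> \<in> Bs \<and> A \<omega> = a \<and> Y \<omega> = y}"
      using X2 unfolding Bs_def by auto
    also have "prob \<dots> = prob {\<omega>\<in>space M. N \<omega> \<in> Bs} * prob {\<omega>\<in>space M. A \<omega> = a \<and> Y \<omega> = y}"
      using indN a y Bs by blast
    also have "prob {\<omega>\<in>space M. A \<omega> = a \<and> Y \<omega> = y} = pp y a"
    proof -
      have "{\<omega>\<in>space M. A \<omega> = a \<and> Y \<omega> = y} = {\<omega>\<in>space M. Y \<omega> = y \<and> A \<omega> = a}" by auto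
      moreover have "prob {\<omega>\<in>space M. Y \<omega> = y \<and> A \<omega> = a} = 1 / (1 + exp (-2*a*y)) * prob {\<omega>\<in>space M. A \<omega> = a}"
        using YA1 a y by blast
      ultimately show ?thesis unfolding pA[OF a] pp_def by simp
    qed
    also have "prob {\<omega>\<in>space M. N \<omega> \<in> Bs} = measure (nu y) B"
    proof -
      have "prob {\<omega>\<in>space M. N \<omega> \<in> Bs} = measure (distr M lborel N) Bs"
        by (subst measure_distr) (auto intro!: arg_cong[where f="prob"])
      also have "distr M lborel N = nu 0" using N1 unfolding distributed_def nu_def by simp
      also have "measure (nu 0) Bs = (\<integral>x. indicator Bs x \<partial>nu 0)" by simp
      also have "\<dots> = (\<integral>x. normal_density 0 1 x * indicator Bs x \<partial>lborel)" by (rule integral_nu) measurable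
      also have "\<dots> = (\<integral>x. normal_density (-y + y) 1 x * indicator B (x - -y) \<partial>lborel)"
        unfolding Bs_def by (intro Bochner_Integration.integral_cong) (auto simp: indicator_def add.commute)
      also have "\<dots> = measure (nu y) B" by (rule nu_shift[OF B])
      finally show ?thesis .
    qed
    finally show "prob {\<omega>\<in>space M. Y \<omega> = y \<and> A \<omega> = a \<and> X2 \<omega> \<in> B} = pp y a * measure (nu y) B" by simp
  qed (use meas1 in auto)
qed




lemma scen2_model:
  fixes M' :: "'b measure" and A' Y' X3 :: "'b \<Rightarrow> real"
  assumes P2: "prob_space M'"
    and meas2: "A' \<in> borel_measurable M'" "Y' \<in> borel_measurable M'" "X3 \<in> borel_measurable M'"
    and vals2: "\<forall>\<omega>\<in>space M'. A' \<omega> \<in> {-1,1} \<and> Y' \<omega> \<in> {-1,1}"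
    and A2: "measure M' {\<omega>\<in>space M'. A' \<omega> = 1} = 1/2"
    and X3A: "\<forall>a\<in>{-1,1}. \<forall>B\<in>sets borel.
       measure M' {\<omega>\<in>space M'. A' \<omega> = a \<and> X3 \<omega> \<in> B}
         = measure M' {\<omega>\<in>space M'. A' \<omega> = a} *
           (LINT x:B|lborel. 1 / (1 + exp (-2*a)) * normal_density (a+1) 1 x
                             + 1 / (1 + exp (2*a)) * normal_density (a-1) 1 x)"
    and YX3: "\<forall>y\<in>{-1,1}. \<forall>a\<in>{-1,1}. \<forall>B\<in>sets borel.
       measure M' {\<omega>\<in>space M'. Y' \<omega> = y \<and> A' \<omega> = a \<and> X3 \<omega> \<in> B}
         = (\<integral>\<omega>. indicator {\<omega>\<in>space M'. A' \<omega> = a \<and> X3 \<omega> \<in> B} \<omega>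
                   * (1 / (1 + exp (-2 * y * X3 \<omega>))) \<partial>M')"
  shows "model M' Y' A' (\<lambda>\<omega>. X3 \<omega> - A' \<omega>)"
proof -
  interpret prob_space M' by (rule P2)
  have [measurable]: "A' \<in> borel_measurable M'" "Y' \<in> borel_measurable M'" "X3 \<in> borel_measurable M'" using meas2 by auto
  have pA: "prob {\<omega>\<in>space M'. A' \<omega> = a} = 1/2" if a: "a \<in> {-1,1}" for a
  proof (cases "a = 1")
    case True then show ?thesis using A2 by simp
  next
    case False
    then have aa: "a = -1" using a by auto
    have "{\<omega>\<in>space M'. A' \<omega> = a} = space M' - {\<omega>\<in>space M'. A' \<omega> = 1}" using vals2 aa by auto
    also have "prob \<dots> = 1 - prob {\<omega>\<in>space M'. A' \<omega> = 1}" by (rule prob_compl) measurable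
    finally show ?thesis using A2 by simp
  qed
  show ?thesis
  proof (unfold_locales)
    show "\<And>\<omega>. \<omega> \<in> space M' \<Longrightarrow> Y' \<omega> \<in> {-1,1} \<and> A' \<omega> \<in> {-1,1}" using vals2 by auto
  next
    fix y a :: real and B :: "real set" assume y: "y \<in> {-1,1}" and a: "a \<in> {-1,1}" and B[measurable]: "B \<in> sets borel"
    define mix where "mix x = 1 / (1 + exp (-2*a)) * normal_density (a+1) 1 x + 1 / (1 + exp (2*a)) * normal_density (a-1) 1 x" for x
    have mixm[measurable]: "mix \<in> borel_measurable borel" unfolding mix_def by measurable
    have mix0: "0 \<le> mix x" for x unfolding mix_def by (intro add_nonneg_nonneg mult_nonneg_nonneg) (auto simp: add_pos_pos less_imp_le)
    have mixi: "integrable lborel mix" unfolding mix_def by (intro Bochner_Integration.integrable_add integrable_mult_right) auto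
    define \<mu> where "\<mu> = density lborel (\<lambda>x. ennreal (mix x))"
    define Bs where "Bs = {x. x - a \<in> B}"
    have Bs[measurable]: "Bs \<in> sets borel" unfolding Bs_def by measurable
    define f where "f x = indicator Bs x * (1 / (1 + exp (-2 * y * x)))" for x :: real
    have fm[measurable]: "f \<in> borel_measurable borel" unfolding f_def by measurable
    define S where "S = {\<omega>\<in>space M'. A' \<omega> = a}"
    have Sm[measurable]: "S \<in> sets M'" unfolding S_def by measurable
    have "{\<omega>\<in>space M'. Y' \<omega> = y \<and> A' \<omega> = a \<and> X3 \<omega> - A' \<omega> \<in> B} = {\<omega>\<in>space M'. Y' \<omega> = y \<and> A' \<omega> = a \<and> X3 \<omega> \<in> Bs}"
      unfolding Bs_def by auto
    also have "prob \<dots> = (\<integral>\<omega>. indicator {\<omega>\<in>space M'. A' \<omega> = a \<and> X3 \<omega> \<in> Bs} \<omega> * (1 / (1 + exp (-2 * y * X3 \<omega>))) \<partial>M')"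
      using YX3 y a Bs by blast
    also have "\<dots> = (\<integral>\<omega>. indicator S \<omega> * f (X3 \<omega>) \<partial>M')"
      unfolding S_def f_def by (intro Bochner_Integration.integral_cong) (auto simp: indicator_def)
    also have "\<dots> = 1/2 * (\<integral>x. f x \<partial>\<mu>)"
    proof (rule integral_restr)
      show "finite_measure \<mu>" unfolding \<mu>_def by (rule finite_density[OF mixm mix0 mixi])
      show "sets \<mu> = sets borel" unfolding \<mu>_def by simp
      fix B' :: "real set" assume B': "B' \<in> sets borel"
      have "{\<omega> \<in> space M'. \<omega> \<in> S \<and> X3 \<omega> \<in> B'} = {\<omega>\<in>space M'. A' \<omega> = a \<and> X3 \<omega> \<in> B'}" unfolding S_def by auto
      also have "prob \<dots> = prob {\<omega>\<in>space M'. A' \<omega> = a} * (LINT x:B'|lborel. mix x)"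
        using X3A a B' unfolding mix_def by blast
      also have "(LINT x:B'|lborel. mix x) = measure \<mu> B'"
        unfolding \<mu>_def by (rule measure_density_LINT[symmetric, OF mixm mix0 mixi B'])
      finally show "prob {\<omega> \<in> space M'. \<omega> \<in> S \<and> X3 \<omega> \<in> B'} = 1/2 * measure \<mu> B'" using pA[OF a] by simp
    qed (auto)
    also have "(\<integral>x. f x \<partial>\<mu>) = (\<integral>x. mix x * f x \<partial>lborel)"
      unfolding \<mu>_def by (subst integral_density) (auto simp: mix0)
    also have "\<dots> = (\<integral>x. 2 * pp y a * (normal_density (a + y) 1 x * indicator B (x - a)) \<partial>lborel)"
    proof (rule Bochner_Integration.integral_cong[OF refl])
      fix x
      have "mix x * (1 / (1 + exp (-2 * y * x))) = 2 * pp y a * normal_density (a + y) 1 x"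
        unfolding mix_def by (rule mix_id[OF y])
      then show "mix x * f x = 2 * pp y a * (normal_density (a + y) 1 x * indicator B (x - a))"
        unfolding f_def Bs_def by (auto simp: indicator_def)
    qed
    also have "\<dots> = 2 * pp y a * measure (nu y) B"
      using nu_shift[OF B, of a y] by simp
    finally show "prob {\<omega>\<in>space M'. Y' \<omega> = y \<and> A' \<omega> = a \<and> X3 \<omega> - A' \<omega> \<in> B} = pp y a * measure (nu y) B"
      by simp
  qed (use meas2 in auto)
qed




lemma red1:
  assumes X1: "\<forall>\<omega>\<in>space M. X1 \<omega> = A \<omega>" and g: "rand_clf M (\<lambda>\<omega>. ((X1 \<omega>, X2 \<omega>), A \<omega>)) g"
  shows "\<exists>k. isk k \<and> (\<forall>\<omega>\<in>space M. g \<omega> = k (A \<omega>, X2 \<omega>))"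
proof -
  obtain h where h[measurable]: "h \<in> borel_measurable borel" and hb: "\<forall>z. 0 \<le> h z \<and> h z \<le> 1"
    and gh: "\<forall>\<omega>\<in>space M. g \<omega> = h ((X1 \<omega>, X2 \<omega>), A \<omega>)" using g unfolding rand_clf_def by blast
  define k where "k x = h ((fst x, snd x), fst x)" for x :: "real \<times> real"
  have "isk k" unfolding isk_def k_def using hb by (auto) measurable
  moreover have "\<forall>\<omega>\<in>space M. g \<omega> = k (A \<omega>, X2 \<omega>)" using gh X1 by (simp add: k_def)
  ultimately show ?thesis by blast
qed

lemma red2:
  assumes g: "rand_clf M (\<lambda>\<omega>. (X3 \<omega>, A' \<omega>)) g"
  shows "\<exists>k. isk k \<and> (\<forall>\<omega>\<in>space M. g \<omega> = k (A' \<omega>, X3 \<omega> - A' \<omega>))"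
proof -
  obtain h where h[measurable]: "h \<in> borel_measurable borel" and hb: "\<forall>z. 0 \<le> h z \<and> h z \<le> 1"
    and gh: "\<forall>\<omega>\<in>space M. g \<omega> = h (X3 \<omega>, A' \<omega>)" using g unfolding rand_clf_def by blast
  define k where "k x = h (snd x + fst x, fst x)" for x :: "real \<times> real"
  have "isk k" unfolding isk_def k_def using hb by (auto) measurable
  moreover have "\<forall>\<omega>\<in>space M. g \<omega> = k (A' \<omega>, X3 \<omega> - A' \<omega>)" using gh by (simp add: k_def)
  ultimately show ?thesis by blast
qed

theorem proposition6p1:
  fixes M :: "'a measure" and A Y N X1 X2 :: "'a \<Rightarrow> real"
    and M' :: "'b measure" and A' Y' X3 :: "'b \<Rightarrow> real"
  assumes \<comment> \<open>Scenario I\<close>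
    P1: "prob_space M"
    and meas1: "A \<in> borel_measurable M" "Y \<in> borel_measurable M" "N \<in> borel_measurable M"
    and vals1: "\<forall>\<omega>\<in>space M. A \<omega> \<in> {-1,1} \<and> Y \<omega> \<in> {-1,1}"
    and A1: "measure M {\<omega>\<in>space M. A \<omega> = 1} = 1/2"
    and YA1: "\<forall>a\<in>{-1,1}. \<forall>y\<in>{-1,1}.
       measure M {\<omega>\<in>space M. Y \<omega> = y \<and> A \<omega> = a}
         = 1 / (1 + exp (-2*a*y)) * measure M {\<omega>\<in>space M. A \<omega> = a}"
    and N1: "distributed M lborel N (\<lambda>x. ennreal (normal_density 0 1 x))"
    and indN: "\<forall>a\<in>{-1,1}. \<forall>y\<in>{-1,1}. \<forall>B\<in>sets borel.
       measure M {\<omega>\<in>space M. N \<omega> \<in> B \<and> A \<omega> = a \<and> Y \<omega> = y}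
         = measure M {\<omega>\<in>space M. N \<omega> \<in> B} * measure M {\<omega>\<in>space M. A \<omega> = a \<and> Y \<omega> = y}"
    and X1: "\<forall>\<omega>\<in>space M. X1 \<omega> = A \<omega>"
    and X2: "\<forall>\<omega>\<in>space M. X2 \<omega> = Y \<omega> + N \<omega>"
  assumes \<comment> \<open>Scenario II\<close>
    P2: "prob_space M'"
    and meas2: "A' \<in> borel_measurable M'" "Y' \<in> borel_measurable M'" "X3 \<in> borel_measurable M'"
    and vals2: "\<forall>\<omega>\<in>space M'. A' \<omega> \<in> {-1,1} \<and> Y' \<omega> \<in> {-1,1}"
    and A2: "measure M' {\<omega>\<in>space M'. A' \<omega> = 1} = 1/2"
    and X3A: "\<forall>a\<in>{-1,1}. \<forall>B\<in>sets borel.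
       measure M' {\<omega>\<in>space M'. A' \<omega> = a \<and> X3 \<omega> \<in> B}
         = measure M' {\<omega>\<in>space M'. A' \<omega> = a} *
           (LINT x:B|lborel. 1 / (1 + exp (-2*a)) * normal_density (a+1) 1 x
                             + 1 / (1 + exp (2*a)) * normal_density (a-1) 1 x)"
    and YX3: "\<forall>y\<in>{-1,1}. \<forall>a\<in>{-1,1}. \<forall>B\<in>sets borel.
       measure M' {\<omega>\<in>space M'. Y' \<omega> = y \<and> A' \<omega> = a \<and> X3 \<omega> \<in> B}
         = (\<integral>\<omega>. indicator {\<omega>\<in>space M'. A' \<omega> = a \<and> X3 \<omega> \<in> B} \<omega>
                   * (1 / (1 + exp (-2 * y * X3 \<omega>))) \<partial>M')"
  shows
    "distr M borel (\<lambda>\<omega>. (Y \<omega>, A \<omega>, X1 \<omega> + X2 \<omega>, X2 \<omega>))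
       = distr M' borel (\<lambda>\<omega>. (Y' \<omega>, A' \<omega>, X3 \<omega>, X3 \<omega> - A' \<omega>))
     \<and> opt_unconstrained_score M Y (\<lambda>\<omega>. ((X1 \<omega>, X2 \<omega>), A \<omega>)) (\<lambda>\<omega>. X1 \<omega> + X2 \<omega>)
     \<and> opt_eo_score M Y A (\<lambda>\<omega>. ((X1 \<omega>, X2 \<omega>), A \<omega>)) X2
     \<and> opt_unconstrained_score M' Y' (\<lambda>\<omega>. (X3 \<omega>, A' \<omega>)) X3
     \<and> opt_eo_score M' Y' A' (\<lambda>\<omega>. (X3 \<omega>, A' \<omega>)) (\<lambda>\<omega>. X3 \<omega> - A' \<omega>)"
proof -
  have m1: "model M Y A X2" by (rule scen1_model[OF P1 meas1 vals1 A1 YA1 N1 indN X2])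
  have m2: "model M' Y' A' (\<lambda>\<omega>. X3 \<omega> - A' \<omega>)" by (rule scen2_model[OF P2 meas2 vals2 A2 X3A YX3])
  have d1: "distr M borel (\<lambda>\<omega>. (Y \<omega>, A \<omega>, X1 \<omega> + X2 \<omega>, X2 \<omega>)) = distr M borel (\<lambda>\<omega>. (Y \<omega>, A \<omega>, A \<omega> + X2 \<omega>, X2 \<omega>))"
    by (rule distr_cong) (auto simp: X1)
  have d2: "distr M' borel (\<lambda>\<omega>. (Y' \<omega>, A' \<omega>, X3 \<omega>, X3 \<omega> - A' \<omega>))
      = distr M' borel (\<lambda>\<omega>. (Y' \<omega>, A' \<omega>, A' \<omega> + (X3 \<omega> - A' \<omega>), X3 \<omega> - A' \<omega>))" by simp
  have D: "distr M borel (\<lambda>\<omega>. (Y \<omega>, A \<omega>, X1 \<omega> + X2 \<omega>, X2 \<omega>))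
       = distr M' borel (\<lambda>\<omega>. (Y' \<omega>, A' \<omega>, X3 \<omega>, X3 \<omega> - A' \<omega>))"
    unfolding d1 d2 by (rule distr_eq[OF m1 m2])
  have U1: "opt_unconstrained_score M Y (\<lambda>\<omega>. ((X1 \<omega>, X2 \<omega>), A \<omega>)) (\<lambda>\<omega>. X1 \<omega> + X2 \<omega>)"
    by (rule model.main_U[OF m1 red1[OF X1]]) (use X1 in auto)
  have E1: "opt_eo_score M Y A (\<lambda>\<omega>. ((X1 \<omega>, X2 \<omega>), A \<omega>)) X2"
    by (rule model.main_E[OF m1 red1[OF X1]])
  have U2: "opt_unconstrained_score M' Y' (\<lambda>\<omega>. (X3 \<omega>, A' \<omega>)) X3"
    by (rule model.main_U[OF m2 red2]) (auto simp: algebra_simps)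
  have E2: "opt_eo_score M' Y' A' (\<lambda>\<omega>. (X3 \<omega>, A' \<omega>)) (\<lambda>\<omega>. X3 \<omega> - A' \<omega>)"
    by (rule model.main_E[OF m2 red2])
  show ?thesis using D U1 E1 U2 E2 by blast
qed



end
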